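(* Let $\lambda$ be a strongly inaccessible cardinal which is a limit of strongly inaccessible cardinals. Then ${}^\lambda2$ can be partitioned into two sets $A_0,A_1$ such that $A_0\in\mathrm{id}(\mathrm{Cohen}_\lambda)$ and $A_1\in\mathrm{id}(\mathbb{Q}_\lambda)$.
   Context: Cardinals denoted $\partial,\kappa,\lambda$ are strongly inaccessible. For a set $T$ of sequences and an ordinal $\delta$, $\lim_\delta(T)=\{\nu\in{}^\delta 2: \nu\restriction\alpha\in T \text{ for all }\alpha<\delta\}$. The forcing notion $\mathbb{Q}_\kappa$ is defined by induction on strongly inaccessible $\kappa$: $p\in\mathbb{Q}_\kappa$ iff there is a witness $(\varrho,S,\bar\Lambda)$, meaning: (a) $p$ is a nonempty subset of ${}^{\kappa>}2$ closed under initial segments; (b) $S\subseteq\kappa$, every member of $S$ is strongly inaccessible, $S$ is not stationary in $\kappa$, and $S\cap\partial$ is not stationary in $\partial$ for every strongly inaccessible $\partial<\kappa$; (c) $\varrho\in{}^{\kappa>}2$, $p\cap{}^\alpha 2=\{\varrho\restriction\alpha\}$ for all $\alpha\le\ell g(\varrho)$, and $\varrho^\frown\langle 0\rangle,\varrho^\frown\langle1\rangle\in p$; (d) if $\varrho\trianglelefteq\eta\in p$ then $\eta^\frown\langle0\rangle,\eta^\frown\langle1\rangle\in p$; (e) if $\delta\in\kappa\setminus S$ is a limit ordinal with $\delta>\ell g(\varrho)$ and $\eta\in{}^\delta2$, then $\eta\in p$ iff $\eta\restriction\alpha\in p$ for all $\alpha<\delta$; (f) $\bar\Lambda=\langle\Lambda_\partial:\partial\in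 S\rangle$ where each $\Lambda_\partial$ is a set of at most $\partial$ dense open subsets of $\mathbb{Q}_\partial$; (g) if $\partial\in S$ and $\partial>\ell g(\varrho)$ then $p\cap{}^{\partial>}2\in\mathbb{Q}_\partial$, and for $\eta\in{}^\partial2$: $\eta\in p$ iff ($\eta\restriction\alpha\in p$ for all $\alpha<\partial$ and for every $\mathscr I\in\Lambda_\partial$ there is $q\in\mathscr I$ with $\eta\in\lim_\partial(q)$). The order is reverse inclusion. An $\eta\in{}^\lambda2$ fulfils $\mathscr I\subseteq\mathbb{Q}_\lambda$ if $\eta\in\lim_\lambda(q)$ for some $q\in\mathscr I$. $\mathrm{id}(\mathbb{Q}_\lambda)$ is the set of $A\subseteq{}^\lambda2$ for which there are $i( * )\le\lambda$ and dense open subsets $\mathscr I_i$ ($i<i( * )$) of $\mathbb{Q}_\lambda$ such that every $\eta\in A$ fails to fulfil $\mathscr I_i$ for some $i<i( * )$. $\mathrm{id}(\mathrm{Cohen}_\lambda)$ is the set of $A\subseteq{}^\lambda2$ with $A\subseteq\bigcup_{i<i( * )}\lim_\lambda(\mathscr T_i)$ for some $i( * )\le\lambda$ and nowhere dense subtrees $\mathscr T_i$ of $({}^{\lambda>}2,\trianglelefteq)$. *)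

theory Defs
  imports Main "HOL-Library.Equipollence"
begin

text \<open>Ordinals are elements of an arbitrary well-ordered type 'o.
 A sequence of length delta (element of {}^delta 2) is a partial map 'o to bool
 whose domain is the initial segment below delta.\<close>

type_synonym 'o seq = "'o \<Rightarrow> bool option"

definition below :: "'o::wellorder \<Rightarrow> 'o set" where
  "below a = {b. b < a}"

definition sq :: "'o::wellorder \<Rightarrow> 'o seq set" where
  "sq d = {\<nu>. dom \<nu> = below d}"

definition sqlt :: "'o::wellorder \<Rightarrow> 'o seq set" where
  "sqlt k = {\<nu>. \<exists>a<k. \<nu> \<in> sq a}"

definition restr :: "'o::wellorder seq \<Rightarrow> 'o \<Rightarrow> 'o seq" where
  "restr \<nu> a = \<nu> |` below a"

definition limd :: "'o::wellorder \<Rightarrow> 'o seq set \<Rightarrow> 'o seq set" where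
  "limd d T = {\<nu> \<in> sq d. \<forall>a<d. restr \<nu> a \<in> T}"

definition limit_ord :: "'o::wellorder \<Rightarrow> bool" where
  "limit_ord d \<longleftrightarrow> (\<exists>a. a < d) \<and> (\<forall>a<d. \<exists>g. a < g \<and> g < d)"

definition strongly_inaccessible :: "'o::wellorder \<Rightarrow> bool" where
  "strongly_inaccessible k \<longleftrightarrow>
     \<not> countable (below k)
   \<and> (\<forall>X \<subseteq> below k. (\<forall>a<k. \<exists>x\<in>X. a \<le> x) \<longrightarrow> X \<approx> below k)
   \<and> (\<forall>a<k. Pow (below a) \<prec> below k)"

definition club :: "'o::wellorder \<Rightarrow> 'o set \<Rightarrow> bool" where
  "club k C \<longleftrightarrow> C \<subseteq> below k \<and> (\<forall>a<k. \<exists>g\<in>C. a \<le> g)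
     \<and> (\<forall>d<k. limit_ord d \<and> (\<forall>a<d. \<exists>g\<in>C. a \<le> g \<and> g < d) \<longrightarrow> d \<in> C)"

definition stationary :: "'o::wellorder \<Rightarrow> 'o set \<Rightarrow> bool" where
  "stationary k S \<longleftrightarrow> (\<forall>C. club k C \<longrightarrow> S \<inter> C \<noteq> {})"

definition dense_open :: "'a set set \<Rightarrow> 'a set set \<Rightarrow> bool" where
  "dense_open P I \<longleftrightarrow> I \<subseteq> P \<and> (\<forall>p\<in>P. \<exists>q\<in>I. q \<subseteq> p)
     \<and> (\<forall>p\<in>I. \<forall>q\<in>P. q \<subseteq> p \<longrightarrow> q \<in> I)"

text \<open>One step of the inductive definition of Q_kappa, given Q_partial for partial < kappa.\<close>
definition Qstep :: "('o::wellorder \<Rightarrow> 'o seq set set) \<Rightarrow> 'o \<Rightarrow> 'o seq set set" where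
  "Qstep F k = {p. \<exists>\<rho> l S \<Lambda>.
     \<comment> \<open>(a)\<close>
     p \<noteq> {} \<and> p \<subseteq> sqlt k \<and> (\<forall>\<eta>\<in>p. \<forall>a. restr \<eta> a \<in> p)
     \<comment> \<open>(b)\<close>
   \<and> S \<subseteq> below k \<and> (\<forall>d\<in>S. strongly_inaccessible d) \<and> \<not> stationary k S
   \<and> (\<forall>d<k. strongly_inaccessible d \<longrightarrow> \<not> stationary d (S \<inter> below d))
     \<comment> \<open>(c)\<close>
   \<and> l < k \<and> \<rho> \<in> sq l \<and> (\<forall>a\<le>l. p \<inter> sq a = {restr \<rho> a})
   \<and> \<rho>(l \<mapsto> False) \<in> p \<and> \<rho>(l \<mapsto> True) \<in> p
     \<comment> \<open>(d)\<close>
   \<and> (\<forall>\<eta>\<in>p. \<forall>d. \<eta> \<in> sq d \<and> \<rho> \<subseteq>\<^sub>m \<eta> \<longrightarrow> \<eta>(d \<mapsto> False) \<in> p \<and> \<eta>(d \<mapsto> True) \<in> p)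
     \<comment> \<open>(e)\<close>
   \<and> (\<forall>d<k. d \<notin> S \<and> limit_ord d \<and> l < d \<longrightarrow>
        (\<forall>\<eta>\<in>sq d. \<eta> \<in> p \<longleftrightarrow> (\<forall>a<d. restr \<eta> a \<in> p)))
     \<comment> \<open>(f)\<close>
   \<and> (\<forall>d\<in>S. \<Lambda> d \<lesssim> below d \<and> (\<forall>I\<in>\<Lambda> d. dense_open (F d) I))
     \<comment> \<open>(g)\<close>
   \<and> (\<forall>d\<in>S. l < d \<longrightarrow> p \<inter> sqlt d \<in> F d \<and>
        (\<forall>\<eta>\<in>sq d. \<eta> \<in> p \<longleftrightarrow> (\<forall>a<d. restr \<eta> a \<in> p) \<and> (\<forall>I\<in>\<Lambda> d. \<exists>q\<in>I. \<eta> \<in> limd d q)))}"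

definition QQ :: "'o::wellorder \<Rightarrow> 'o seq set set" where
  "QQ = wfrec {(x, y). x < y} Qstep"

definition fulfils :: "'o::wellorder \<Rightarrow> 'o seq \<Rightarrow> 'o seq set set \<Rightarrow> bool" where
  "fulfils lam \<eta> I \<longleftrightarrow> (\<exists>q\<in>I. \<eta> \<in> limd lam q)"

definition id_Q :: "'o::wellorder \<Rightarrow> 'o seq set set" where
  "id_Q lam = {A. A \<subseteq> sq lam \<and> (\<exists>istar \<le> lam. \<exists>I. (\<forall>i<istar. dense_open (QQ lam) (I i))
       \<and> (\<forall>\<eta>\<in>A. \<exists>i<istar. \<not> fulfils lam \<eta> (I i)))}"

definition nowhere_dense_subtree :: "'o::wellorder \<Rightarrow> 'o seq set \<Rightarrow> bool" where
  "nowhere_dense_subtree lam T \<longleftrightarrow> T \<subseteq> sqlt lam \<and> (\<forall>\<eta>\<in>T. \<forall>a. restr \<eta> a \<in> T)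
     \<and> (\<forall>\<eta>\<in>sqlt lam. \<exists>\<nu>\<in>sqlt lam. \<eta> \<subseteq>\<^sub>m \<nu> \<and> \<nu> \<notin> T)"

definition id_Cohen :: "'o::wellorder \<Rightarrow> 'o seq set set" where
  "id_Cohen lam = {A. A \<subseteq> sq lam \<and> (\<exists>istar \<le> lam. \<exists>T. (\<forall>i<istar. nowhere_dense_subtree lam (T i))
       \<and> A \<subseteq> (\<Union>i\<in>below istar. limd lam (T i)))}"

end

theory Submission
  imports Defs
begin


definition W :: "('o::wellorder \<Rightarrow> 'o seq set set) \<Rightarrow> 'o \<Rightarrow> 'o seq set \<Rightarrow> 'o seq \<Rightarrow> 'o \<Rightarrow> 'o set \<Rightarrow> ('o \<Rightarrow> 'o seq set set set) \<Rightarrow> bool" where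
  "W F k p \<rho> l S \<Lambda> \<longleftrightarrow>
     p \<noteq> {} \<and> p \<subseteq> sqlt k \<and> (\<forall>\<eta>\<in>p. \<forall>a. restr \<eta> a \<in> p)
   \<and> S \<subseteq> below k \<and> (\<forall>d\<in>S. strongly_inaccessible d) \<and> \<not> stationary k S
   \<and> (\<forall>d<k. strongly_inaccessible d \<longrightarrow> \<not> stationary d (S \<inter> below d))
   \<and> l < k \<and> \<rho> \<in> sq l \<and> (\<forall>a\<le>l. p \<inter> sq a = {restr \<rho> a})
   \<and> \<rho>(l \<mapsto> False) \<in> p \<and> \<rho>(l \<mapsto> True) \<in> p
   \<and> (\<forall>\<eta>\<in>p. \<forall>d. \<eta> \<in> sq d \<and> \<rho> \<subseteq>\<^sub>m \<eta> \<longrightarrow> \<eta>(d \<mapsto> False) \<in> p \<and> \<eta>(d \<mapsto> True) \<in> p)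
   \<and> (\<forall>d<k. d \<notin> S \<and> limit_ord d \<and> l < d \<longrightarrow>
        (\<forall>\<eta>\<in>sq d. \<eta> \<in> p \<longleftrightarrow> (\<forall>a<d. restr \<eta> a \<in> p)))
   \<and> (\<forall>d\<in>S. \<Lambda> d \<lesssim> below d \<and> (\<forall>I\<in>\<Lambda> d. dense_open (F d) I))
   \<and> (\<forall>d\<in>S. l < d \<longrightarrow> p \<inter> sqlt d \<in> F d \<and>
        (\<forall>\<eta>\<in>sq d. \<eta> \<in> p \<longleftrightarrow> (\<forall>a<d. restr \<eta> a \<in> p) \<and> (\<forall>I\<in>\<Lambda> d. \<exists>q\<in>I. \<eta> \<in> limd d q)))"

lemma Qstep_W: "Qstep F k = {p. \<exists>\<rho> l S \<Lambda>. W F k p \<rho> l S \<Lambda>}"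
  unfolding Qstep_def W_def by simp

lemma W_cong:
  assumes "\<And>d. d < k \<Longrightarrow> F d = G d"
  shows "W F k p \<rho> l S \<Lambda> = W G k p \<rho> l S \<Lambda>"
proof (cases "S \<subseteq> below k")
  case True
  then have h: "\<And>d. d \<in> S \<Longrightarrow> F d = G d" using assms by (auto simp: below_def)
  show ?thesis unfolding W_def by (simp add: h cong: ball_cong)
next
  case False
  then show ?thesis unfolding W_def by simp
qed

lemma QQ_eq: "QQ k = {p. \<exists>\<rho> l S \<Lambda>. W QQ k p \<rho> l S \<Lambda>}"
proof -
  have "adm_wf {(x, y). x < y} (Qstep::('a \<Rightarrow> 'a seq set set) \<Rightarrow> 'a \<Rightarrow> 'a seq set set)"
    unfolding adm_wf_def
  proof (intro allI impI)
    fix f g :: "'a \<Rightarrow> 'a seq set set" and x :: 'a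
    assume "\<forall>z. (z, x) \<in> {(x, y). x < y} \<longrightarrow> f z = g z"
    then have "\<And>d. d < x \<Longrightarrow> f d = g d" by auto
    then have "\<And>p \<rho> l S \<Lambda>. W f x p \<rho> l S \<Lambda> = W g x p \<rho> l S \<Lambda>" by (rule W_cong)
    then have "W f x = W g x" by (simp add: fun_eq_iff)
    then show "Qstep f x = Qstep g x" unfolding Qstep_W by simp
  qed
  moreover have "wf {(x::'a, y). x < y}" using wf by auto
  ultimately have "wfrec {(x::'a, y). x < y} Qstep = Qstep (wfrec {(x::'a, y). x < y} Qstep)"
    by (rule wfrec_fixpoint[rotated])
  then have "QQ = Qstep (QQ::'a \<Rightarrow> _)" unfolding QQ_def[abs_def] by simp
  then show ?thesis using Qstep_W by metis
qed



lemma sq_iff: "\<nu> \<in> sq d \<longleftrightarrow> dom \<nu> = below d" by (simp add: sq_def)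

lemma below_iff[simp]: "b \<in> below a \<longleftrightarrow> b < a" by (simp add: below_def)

lemma below_eq_iff: "below (a::'a::wellorder) = below b \<longleftrightarrow> a = b"
proof
  assume h: "below a = below b"
  show "a = b"
  proof (rule ccontr)
    assume "a \<noteq> b"
    then consider "a < b" | "b < a" by (meson linorder_neqE)
    then show False
    proof cases
      case 1 then have "a \<in> below b" by simp
      then show False using h by (metis below_iff less_irrefl)
    next
      case 2 then have "b \<in> below a" by simp
      then show False using h by (metis below_iff less_irrefl)
    qed
  qed
qed simp

lemma sq_unique: "\<nu> \<in> sq a \<Longrightarrow> \<nu> \<in> sq b \<Longrightarrow> a = b"
  by (simp add: sq_def below_eq_iff)

lemma dom_restr: "dom (restr \<nu> a) = dom \<nu> \<inter> below a"
  by (simp add: restr_def)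

lemma restr_sq: "\<nu> \<in> sq d \<Longrightarrow> a \<le> d \<Longrightarrow> restr \<nu> a \<in> sq a"
  by (auto simp: sq_def dom_restr below_def)

lemma restr_sq_min: "\<nu> \<in> sq d \<Longrightarrow> restr \<nu> a \<in> sq (min a d)"
  by (auto simp: sq_def dom_restr below_def)

lemma restr_app: "x < a \<Longrightarrow> restr \<nu> a x = \<nu> x"
  by (simp add: restr_def)

lemma restr_id: "\<nu> \<in> sq d \<Longrightarrow> d \<le> a \<Longrightarrow> restr \<nu> a = \<nu>"
proof (rule ext)
  fix x assume h: "\<nu> \<in> sq d" "d \<le> a"
  show "restr \<nu> a x = \<nu> x"
  proof (cases "x < a")
    case True then show ?thesis by (simp add: restr_app)
  next
    case False
    then have "x \<notin> dom \<nu>" using h by (simp add: sq_def)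
    then show ?thesis using False by (simp add: restr_def domIff)
  qed
qed

lemma restr_restr: "restr (restr \<nu> a) b = restr \<nu> (min a b)"
  by (auto simp: restr_def below_def restrict_map_def fun_eq_iff)

lemma restr_le: "restr \<nu> a \<subseteq>\<^sub>m \<nu>"
  by (simp add: restr_def map_le_def)

lemma sqlt_iff: "\<nu> \<in> sqlt k \<longleftrightarrow> (\<exists>a<k. \<nu> \<in> sq a)" by (simp add: sqlt_def)

lemma map_le_sq:
  assumes "\<eta> \<in> sq a" "\<sigma> \<in> sq m" "\<eta> \<subseteq>\<^sub>m \<sigma>"
  shows "a \<le> m \<and> \<eta> = restr \<sigma> a"
proof -
  have "dom \<eta> \<subseteq> dom \<sigma>" using assms(3) map_le_implies_dom_le by blast
  then have am: "a \<le> m" using assms(1,2) by (auto simp: sq_def below_def subset_iff)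
  have "\<eta> = restr \<sigma> a"
  proof (rule ext)
    fix x show "\<eta> x = restr \<sigma> a x"
    proof (cases "x < a")
      case True
      then have "x \<in> dom \<eta>" using assms(1) by (simp add: sq_def)
      then obtain y where "\<eta> x = Some y" by auto
      moreover then have "\<sigma> x = Some y" using assms(3) by (simp add: map_le_def, metis domI)
      ultimately show ?thesis using True by (simp add: restr_app)
    next
      case False
      then have "x \<notin> dom \<eta>" using assms(1) by (simp add: sq_def)
      then show ?thesis using False by (simp add: restr_def domIff)
    qed
  qed
  with am show ?thesis by simp
qed



lemma upd_dom: "\<eta> \<in> sq d \<Longrightarrow> dom (\<eta>(d \<mapsto> x)) = {b. b \<le> d}"
  by (auto simp: sq_def)

lemma succ_level:
  assumes "\<nu> \<in> sq a" "dom \<nu> = {b. b \<le> d}"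
  shows "d < a \<and> (\<forall>g. d < g \<longrightarrow> a \<le> g)"
proof -
  have e: "below a = {b. b \<le> d}" using assms by (simp add: sq_def)
  have "d < a" using e by (metis below_iff mem_Collect_eq order_refl)
  moreover have "\<forall>g. d < g \<longrightarrow> a \<le> g" using e
    by (metis below_iff leI mem_Collect_eq not_less)
  ultimately show ?thesis by blast
qed

lemma upd_sq:
  assumes "\<eta> \<in> sq d" "d < g"
  shows "\<eta>(d \<mapsto> x) \<in> sq (LEAST b. d < b)"
proof -
  let ?a = "LEAST b. d < b"
  have da: "d < ?a" using assms(2) by (rule LeastI)
  have "below ?a = {b. b \<le> d}"
  proof (auto)
    fix b assume "b < ?a" then show "b \<le> d" using not_less_Least not_less by blast
  next
    fix b assume "b \<le> d" then show "b < ?a" using da by simp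
  qed
  then show ?thesis using upd_dom[OF assms(1)] by (simp add: sq_def)
qed

lemma upd_sqlt:
  assumes "\<eta> \<in> sq d" "limit_ord k" "d < k"
  shows "\<eta>(d \<mapsto> x) \<in> sqlt k"
proof -
  obtain g where g: "d < g" "g < k" using assms(2,3) by (auto simp: limit_ord_def)
  have "(LEAST b. d < b) \<le> g" using g(1) by (rule Least_le)
  then have "(LEAST b. d < b) < k" using g(2) by (rule le_less_trans)
  then show ?thesis using upd_sq[OF assms(1) g(1)] sqlt_iff by blast
qed

lemma upd_le: "\<eta> \<in> sq d \<Longrightarrow> \<eta> \<subseteq>\<^sub>m \<eta>(d \<mapsto> x)"
  by (auto simp: map_le_def sq_def)

lemma restr_upd: "\<eta> \<in> sq d \<Longrightarrow> \<delta> \<le> d \<Longrightarrow> restr (\<eta>(d \<mapsto> x)) \<delta> = restr \<eta> \<delta>"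
  by (auto simp: restr_def restrict_map_def fun_eq_iff)

lemma upd_app: "(\<eta>(d \<mapsto> x)) d = Some x" by simp

lemma inacc_uncountable: "strongly_inaccessible k \<Longrightarrow> \<not> countable (below k)"
  by (simp add: strongly_inaccessible_def)

lemma inacc_infinite: "strongly_inaccessible k \<Longrightarrow> infinite (below k)"
  using inacc_uncountable countable_finite by blast

lemma inacc_nonempty: "strongly_inaccessible k \<Longrightarrow> \<exists>a. a < k"
  using inacc_infinite by (metis below_iff equals0I finite.emptyI)

lemma insert_below_lepoll_Pow: "insert a (below a) \<lesssim> Pow (below a)"
proof -
  let ?f = "\<lambda>x. if x = a then {} else {x}"
  have "inj_on ?f (insert a (below a))" by (auto simp: inj_on_def)
  moreover have "?f ` insert a (below a) \<subseteq> Pow (below a)" by auto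
  ultimately show ?thesis unfolding lepoll_def by blast
qed

lemma inacc_limit:
  assumes "strongly_inaccessible k"
  shows "limit_ord k"
  unfolding limit_ord_def
proof (intro conjI allI impI)
  show "\<exists>a. a < k" using inacc_nonempty[OF assms] .
next
  fix a assume ak: "a < k"
  show "\<exists>g. a < g \<and> g < k"
  proof (rule ccontr)
    assume "\<not> (\<exists>g. a < g \<and> g < k)"
    then have "below k = insert a (below a)" using ak
      by (auto simp: below_def) (meson leI less_le_trans order.not_eq_order_implies_strict)
    then have "below k \<lesssim> Pow (below a)" using insert_below_lepoll_Pow by metis
    moreover have "Pow (below a) \<prec> below k" using assms ak by (simp add: strongly_inaccessible_def)
    ultimately show False by (meson lepoll_antisym lesspoll_def)
  qed
qed

lemma limit_between: "limit_ord k \<Longrightarrow> a < k \<Longrightarrow> \<exists>g. a < g \<and> g < k"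
  by (simp add: limit_ord_def)



lemma omega_sup:
  fixes f :: "'a::wellorder \<Rightarrow> 'a"
  assumes inacc: "strongly_inaccessible k" and f: "\<And>x. x < k \<Longrightarrow> x < f x \<and> f x < k" and ak: "a < k"
  shows "\<exists>g<k. limit_ord g \<and> (\<forall>n. (f^^n) a < g) \<and> (\<forall>c<g. \<exists>n. c < (f^^n) a)"
proof -
  define s where "s n = (f^^n) a" for n
  have sk: "s n < k" for n
  proof (induction n)
    case 0 show ?case using ak by (simp add: s_def)
  next
    case (Suc n) then show ?case using f[of "s n"] by (simp add: s_def)
  qed
  have sinc: "s n < s (Suc n)" for n using f[OF sk[of n]] by (simp add: s_def)
  have "\<not> (\<forall>b<k. \<exists>x\<in>range s. b \<le> x)"
  proof
    assume cof: "\<forall>b<k. \<exists>x\<in>range s. b \<le> x"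
    have "range s \<subseteq> below k" using sk by auto
    then have "range s \<approx> below k" using cof inacc unfolding strongly_inaccessible_def by blast
    then have "below k \<approx> range s" by (rule eqpoll_sym)
    then have "countable (below k)" using countable_eqpoll[of "range s" "below k"] by simp
    then show False using inacc_uncountable[OF inacc] by blast
  qed
  then obtain b where bk: "b < k" and sb: "\<And>n. s n < b" by (auto simp: not_le)
  define g where "g = (LEAST g. \<forall>n. s n < g)"
  have sg: "\<forall>n. s n < g" unfolding g_def by (rule LeastI[of _ b]) (use sb in blast)
  have gb: "g \<le> b" unfolding g_def using sb by (intro Least_le) blast
  have cof: "\<exists>n. c < s n" if "c < g" for c
  proof -
    have "\<not> (\<forall>n. s n < c)" using not_less_Least[of c "\<lambda>g. \<forall>n. s n < g"] that g_def by simp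
    then obtain n where "c \<le> s n" by (auto simp: not_less)
    then show ?thesis using sinc by (meson le_less_trans)
  qed
  have "limit_ord g" unfolding limit_ord_def
  proof (intro conjI allI impI)
    show "\<exists>a. a < g" using sg by blast
  next
    fix c assume "c < g"
    then obtain n where "c < s n" using cof by blast
    then show "\<exists>h. c < h \<and> h < g" using sg by blast
  qed
  moreover have "g < k" using gb bk by (rule le_less_trans)
  ultimately show ?thesis using sg cof unfolding s_def by blast
qed

lemma club_inter:
  assumes inacc: "strongly_inaccessible k" and c1: "club k C1" and c2: "club k C2"
  shows "club k (C1 \<inter> C2)"
proof -
  have lim: "limit_ord k" using inacc_limit[OF inacc] .
  have up: "\<exists>g\<in>C. x < g" if cC: "club k C" and xk: "x < k" for C x
  proof -
    obtain y where "x < y" "y < k" using lim xk limit_between by blast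
    then obtain g where "g \<in> C" "y \<le> g" using cC by (auto simp: club_def)
    then show ?thesis using \<open>x < y\<close> by (meson less_le_trans)
  qed
  define f1 where "f1 x = (SOME g. g \<in> C1 \<and> x < g)" for x
  define f2 where "f2 x = (SOME g. g \<in> C2 \<and> x < g)" for x
  have f1: "f1 x \<in> C1 \<and> x < f1 x" if "x < k" for x
    unfolding f1_def using up[OF c1 that] by (metis (mono_tags, lifting) someI_ex)
  have f2: "f2 x \<in> C2 \<and> x < f2 x" if "x < k" for x
    unfolding f2_def using up[OF c2 that] by (metis (mono_tags, lifting) someI_ex)
  have C1k: "C1 \<subseteq> below k" and C2k: "C2 \<subseteq> below k" using c1 c2 by (auto simp: club_def)
  define f where "f x = f2 (f1 x)" for x
  have f: "x < f x \<and> f x < k" if "x < k" for x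
  proof -
    have "f1 x < k" using f1[OF that] C1k by auto
    then show ?thesis using f1[OF that] f2[of "f1 x"] C2k unfolding f_def by auto
  qed
  have unb: "\<exists>g\<in>C1 \<inter> C2. a \<le> g" if ak: "a < k" for a
  proof -
    obtain g where g: "g < k" "limit_ord g" "\<forall>n. (f^^n) a < g" "\<forall>c<g. \<exists>n. c < (f^^n) a"
      using omega_sup[OF inacc f ak] by blast
    have fnk: "(f^^n) a < k" for n using g(1,3) by (meson order.strict_trans)
    have f1k: "f1 ((f^^n) a) < k" for n using f1[OF fnk[of n]] C1k by auto
    have f12: "f1 ((f^^n) a) < f ((f^^n) a) \<and> f ((f^^n) a) \<in> C2" for n
      using f2[OF f1k] unfolding f_def by auto
    have "g \<in> C1"
    proof -
      have "\<forall>c<g. \<exists>h\<in>C1. c \<le> h \<and> h < g"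
      proof (intro allI impI)
        fix c assume "c < g"
        then obtain n where "c < (f^^n) a" using g(4) by blast
        moreover have "f1 ((f^^n) a) \<in> C1" "(f^^n) a < f1 ((f^^n) a)" using f1[OF fnk] by auto
        moreover have "f1 ((f^^n) a) < f ((f^^n) a)" using f12 by blast
        moreover have "f ((f^^n) a) < g" using g(3)[rule_format, of "Suc n"] by simp
        ultimately show "\<exists>h\<in>C1. c \<le> h \<and> h < g" by (meson less_imp_le less_trans)
      qed
      then show ?thesis using c1 g(1,2) by (auto simp: club_def)
    qed
    moreover have "g \<in> C2"
    proof -
      have "\<forall>c<g. \<exists>h\<in>C2. c \<le> h \<and> h < g"
      proof (intro allI impI)
        fix c assume "c < g"
        then obtain n where "c < (f^^n) a" using g(4) by blast
        moreover have "f ((f^^n) a) \<in> C2" "(f^^n) a < f ((f^^n) a)"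
          using f12[of n] f1[OF fnk] by (auto intro: less_trans)
        moreover have "f ((f^^n) a) < g" using g(3)[rule_format, of "Suc n"] by simp
        ultimately show "\<exists>h\<in>C2. c \<le> h \<and> h < g" by (meson less_imp_le less_trans)
      qed
      then show ?thesis using c2 g(1,2) by (auto simp: club_def)
    qed
    moreover have "a \<le> g" using g(3)[rule_format, of 0] by simp
    ultimately show ?thesis by blast
  qed
  have "C1 \<inter> C2 \<subseteq> below k" using C1k by blast
  moreover have "\<forall>d<k. limit_ord d \<and> (\<forall>a<d. \<exists>g\<in>C1 \<inter> C2. a \<le> g \<and> g < d) \<longrightarrow> d \<in> C1 \<inter> C2"
  proof (intro allI impI)
    fix d assume d: "d < k" "limit_ord d \<and> (\<forall>a<d. \<exists>g\<in>C1 \<inter> C2. a \<le> g \<and> g < d)"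
    then have "d \<in> C1" using c1 unfolding club_def by (metis IntD1)
    moreover have "d \<in> C2" using c2 d unfolding club_def by (metis IntD2)
    ultimately show "d \<in> C1 \<inter> C2" by blast
  qed
  ultimately show ?thesis using unb unfolding club_def by blast
qed

lemma nonstat_union:
  assumes "strongly_inaccessible k" "\<not> stationary k S" "\<not> stationary k T"
  shows "\<not> stationary k (S \<union> T)"
proof -
  obtain C1 where "club k C1" "S \<inter> C1 = {}" using assms(2) by (auto simp: stationary_def)
  moreover obtain C2 where "club k C2" "T \<inter> C2 = {}" using assms(3) by (auto simp: stationary_def)
  ultimately show ?thesis using club_inter[OF assms(1)] unfolding stationary_def by blast
qed

lemma nonstat_subset: "\<not> stationary k S \<Longrightarrow> T \<subseteq> S \<Longrightarrow> \<not> stationary k T"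
  by (auto simp: stationary_def)



definition DD :: "'a::wellorder \<Rightarrow> 'a set" where
  "DD lam = {\<delta>. \<delta> < lam \<and> strongly_inaccessible \<delta> \<and> (\<exists>a<\<delta>. \<forall>i. strongly_inaccessible i \<and> i < \<delta> \<longrightarrow> i \<le> a)}"

lemma DD_nonstat:
  assumes inacc: "strongly_inaccessible k"
  shows "\<not> stationary k (DD lam \<inter> below k)"
proof (cases "\<forall>a<k. \<exists>i. strongly_inaccessible i \<and> a < i \<and> i < k")
  case True
  define C where "C = {g. g < k \<and> limit_ord g \<and> (\<forall>a<g. \<exists>i. strongly_inaccessible i \<and> a < i \<and> i < g)}"
  define f where "f x = (SOME i. strongly_inaccessible i \<and> x < i \<and> i < k)" for x
  have f: "strongly_inaccessible (f x) \<and> x < f x \<and> f x < k" if "x < k" for x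
    unfolding f_def using True that by (metis (mono_tags, lifting) someI_ex)
  have lim: "limit_ord k" using inacc_limit[OF inacc] .
  have "club k C" unfolding club_def
  proof (intro conjI allI impI)
    show "C \<subseteq> below k" by (auto simp: C_def)
  next
    fix a assume ak: "a < k"
    obtain g where g: "g < k" "limit_ord g" "\<forall>n. (f^^n) a < g" "\<forall>c<g. \<exists>n. c < (f^^n) a"
      using omega_sup[OF inacc _ ak, of f] f by blast
    have fnk: "(f^^n) a < k" for n using g(1,3) by (meson order.strict_trans)
    have "\<forall>c<g. \<exists>i. strongly_inaccessible i \<and> c < i \<and> i < g"
    proof (intro allI impI)
      fix c assume "c < g"
      then obtain n where n: "c < (f^^n) a" using g(4) by blast
      have "(f^^Suc n) a < g" using g(3) by blast
      then show "\<exists>i. strongly_inaccessible i \<and> c < i \<and> i < g"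
        using f[OF fnk[of n]] n by (auto intro: less_trans)
    qed
    then have "g \<in> C" using g(1,2) by (simp add: C_def)
    moreover have "a \<le> g" using g(3)[rule_format, of 0] by simp
    ultimately show "\<exists>g\<in>C. a \<le> g" by blast
  next
    fix d assume d: "d < k" "limit_ord d \<and> (\<forall>a<d. \<exists>g\<in>C. a \<le> g \<and> g < d)"
    have "\<forall>a<d. \<exists>i. strongly_inaccessible i \<and> a < i \<and> i < d"
    proof (intro allI impI)
      fix a assume "a < d"
      then obtain a' where a': "a < a'" "a' < d" using d(2) limit_between by blast
      then obtain g where g: "g \<in> C" "a' \<le> g" "g < d" using d(2) by blast
      then have "a < g" using a' by (meson less_le_trans)
      then obtain i where "strongly_inaccessible i" "a < i" "i < g" using g(1) by (auto simp: C_def)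
      then show "\<exists>i. strongly_inaccessible i \<and> a < i \<and> i < d" using g(3) by (meson less_trans)
    qed
    then show "d \<in> C" using d by (simp add: C_def)
  qed
  moreover have "DD lam \<inter> below k \<inter> C = {}"
  proof (rule ccontr)
    assume "DD lam \<inter> below k \<inter> C \<noteq> {}"
    then obtain \<delta> where "\<delta> \<in> DD lam" "\<delta> \<in> C" by blast
    then obtain a where a: "a < \<delta>" "\<forall>i. strongly_inaccessible i \<and> i < \<delta> \<longrightarrow> i \<le> a"
      and "\<forall>a<\<delta>. \<exists>i. strongly_inaccessible i \<and> a < i \<and> i < \<delta>" by (auto simp: DD_def C_def)
    then obtain i where "strongly_inaccessible i" "a < i" "i < \<delta>" by blast
    then show False using a(2) by (meson not_le)
  qed
  ultimately show ?thesis unfolding stationary_def by blast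
next
  case False
  then obtain a where ak: "a < k" and na: "\<forall>i. strongly_inaccessible i \<and> a < i \<longrightarrow> \<not> i < k" by blast
  define C where "C = {g. a < g \<and> g < k}"
  have lim: "limit_ord k" using inacc_limit[OF inacc] .
  have "club k C" unfolding club_def
  proof (intro conjI allI impI)
    show "C \<subseteq> below k" by (auto simp: C_def)
  next
    fix x assume xk: "x < k"
    show "\<exists>g\<in>C. x \<le> g"
    proof (cases "a < x")
      case True then show ?thesis using xk by (auto simp: C_def)
    next
      case False
      obtain y where "a < y" "y < k" using lim ak limit_between by blast
      then show ?thesis using False by (auto simp: C_def intro!: bexI[of _ y])
    qed
  next
    fix d assume d: "d < k" "limit_ord d \<and> (\<forall>b<d. \<exists>g\<in>C. b \<le> g \<and> g < d)"
    obtain b where "b < d" using d(2) by (auto simp: limit_ord_def)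
    then obtain g where "g \<in> C" "g < d" using d(2) by blast
    then show "d \<in> C" using d(1) by (auto simp: C_def)
  qed
  moreover have "DD lam \<inter> below k \<inter> C = {}"
    using na by (auto simp: DD_def C_def)
  ultimately show ?thesis unfolding stationary_def by blast
qed



lemma W_D:
  assumes "W F k p \<rho> l S \<Lambda>"
  shows "p \<noteq> {}" and "p \<subseteq> sqlt k" and "\<forall>\<eta>\<in>p. \<forall>a. restr \<eta> a \<in> p"
   and "S \<subseteq> below k" and "\<forall>d\<in>S. strongly_inaccessible d" and "\<not> stationary k S"
   and "\<forall>d<k. strongly_inaccessible d \<longrightarrow> \<not> stationary d (S \<inter> below d)"
   and "l < k" and "\<rho> \<in> sq l" and "\<forall>a\<le>l. p \<inter> sq a = {restr \<rho> a}"
   and "\<rho>(l \<mapsto> False) \<in> p" and "\<rho>(l \<mapsto> True) \<in> p"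
   and "\<forall>\<eta>\<in>p. \<forall>d. \<eta> \<in> sq d \<and> \<rho> \<subseteq>\<^sub>m \<eta> \<longrightarrow> \<eta>(d \<mapsto> False) \<in> p \<and> \<eta>(d \<mapsto> True) \<in> p"
   and "\<forall>d<k. d \<notin> S \<and> limit_ord d \<and> l < d \<longrightarrow>
        (\<forall>\<eta>\<in>sq d. \<eta> \<in> p \<longleftrightarrow> (\<forall>a<d. restr \<eta> a \<in> p))"
   and "\<forall>d\<in>S. \<Lambda> d \<lesssim> below d \<and> (\<forall>I\<in>\<Lambda> d. dense_open (F d) I)"
   and "\<forall>d\<in>S. l < d \<longrightarrow> p \<inter> sqlt d \<in> F d \<and>
        (\<forall>\<eta>\<in>sq d. \<eta> \<in> p \<longleftrightarrow> (\<forall>a<d. restr \<eta> a \<in> p) \<and> (\<forall>I\<in>\<Lambda> d. \<exists>q\<in>I. \<eta> \<in> limd d q))"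
  using assms unfolding W_def by simp_all

lemma W_I:
  assumes "p \<noteq> {}" and "p \<subseteq> sqlt k" and "\<forall>\<eta>\<in>p. \<forall>a. restr \<eta> a \<in> p"
   and "S \<subseteq> below k" and "\<forall>d\<in>S. strongly_inaccessible d" and "\<not> stationary k S"
   and "\<forall>d<k. strongly_inaccessible d \<longrightarrow> \<not> stationary d (S \<inter> below d)"
   and "l < k" and "\<rho> \<in> sq l" and "\<forall>a\<le>l. p \<inter> sq a = {restr \<rho> a}"
   and "\<rho>(l \<mapsto> False) \<in> p" and "\<rho>(l \<mapsto> True) \<in> p"
   and "\<forall>\<eta>\<in>p. \<forall>d. \<eta> \<in> sq d \<and> \<rho> \<subseteq>\<^sub>m \<eta> \<longrightarrow> \<eta>(d \<mapsto> False) \<in> p \<and> \<eta>(d \<mapsto> True) \<in> p"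
   and "\<forall>d<k. d \<notin> S \<and> limit_ord d \<and> l < d \<longrightarrow>
        (\<forall>\<eta>\<in>sq d. \<eta> \<in> p \<longleftrightarrow> (\<forall>a<d. restr \<eta> a \<in> p))"
   and "\<forall>d\<in>S. \<Lambda> d \<lesssim> below d \<and> (\<forall>I\<in>\<Lambda> d. dense_open (F d) I)"
   and "\<forall>d\<in>S. l < d \<longrightarrow> p \<inter> sqlt d \<in> F d \<and>
        (\<forall>\<eta>\<in>sq d. \<eta> \<in> p \<longleftrightarrow> (\<forall>a<d. restr \<eta> a \<in> p) \<and> (\<forall>I\<in>\<Lambda> d. \<exists>q\<in>I. \<eta> \<in> limd d q))"
  shows "W F k p \<rho> l S \<Lambda>"
  unfolding W_def by (intro conjI; fact assms)

lemma QQ_iff: "p \<in> QQ k \<longleftrightarrow> (\<exists>\<rho> l S \<Lambda>. W QQ k p \<rho> l S \<Lambda>)"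
  apply (subst QQ_eq)
  apply (rule mem_Collect_eq)
  done

lemma sq_sqlt: "\<eta> \<in> sq a \<Longrightarrow> a < d \<Longrightarrow> \<eta> \<in> sqlt d"
  unfolding sqlt_iff by blast

lemma sqlt_mono: "\<eta> \<in> sqlt a \<Longrightarrow> a \<le> d \<Longrightarrow> \<eta> \<in> sqlt d"
  unfolding sqlt_iff by (meson less_le_trans)

lemma restr_sqlt: "\<eta> \<in> sqlt d \<Longrightarrow> restr \<eta> a \<in> sqlt d"
proof -
  assume "\<eta> \<in> sqlt d"
  then obtain b where "b < d" "\<eta> \<in> sq b" unfolding sqlt_iff by blast
  then show ?thesis using sq_sqlt[OF restr_sq_min[of \<eta> b a]] le_less_trans[OF min.cobounded2 \<open>b < d\<close>]
    by blast
qed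

lemma sq_sqlt_iff:
  assumes "\<eta> \<in> sq a" shows "\<eta> \<in> sqlt d \<longleftrightarrow> a < d"
proof
  assume "\<eta> \<in> sqlt d"
  then obtain a' where "a' < d" "\<eta> \<in> sq a'" unfolding sqlt_iff by blast
  then show "a < d" using sq_unique[OF assms] by blast
next
  assume "a < d" then show "\<eta> \<in> sqlt d" using assms sq_sqlt by blast
qed

lemma W_stem_in: "W F k p \<rho> l S \<Lambda> \<Longrightarrow> \<rho> \<in> p"
proof -
  assume W: "W F k p \<rho> l S \<Lambda>"
  have "p \<inter> sq l = {restr \<rho> l}" using W_D(10)[OF W, rule_format, OF order_refl] .
  moreover have "restr \<rho> l = \<rho>" by (rule restr_id[OF W_D(9)[OF W] order_refl])
  ultimately have e: "p \<inter> sq l = {\<rho>}" by simp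
  have "\<rho> \<in> {\<rho>}" by (rule singletonI)
  then have "\<rho> \<in> p \<inter> sq l" by (subst e)
  then show ?thesis by (rule IntD1)
qed

lemma W_restrict:
  assumes W: "W QQ \<kappa> p \<rho> l S \<Lambda>" and inacc: "strongly_inaccessible d" and ld: "l < d" and dk: "d < \<kappa>"
  shows "W QQ d (p \<inter> sqlt d) \<rho> l (S \<inter> below d) \<Lambda>"
proof (rule W_I)
  have limd: "limit_ord d" using inacc_limit[OF inacc] .
  note D = W_D[OF W]
  show "p \<inter> sqlt d \<noteq> {}" using W_stem_in[OF W] sq_sqlt[OF D(9) ld] by blast
  show "p \<inter> sqlt d \<subseteq> sqlt d" by blast
  show "\<forall>\<eta>\<in>p \<inter> sqlt d. \<forall>a. restr \<eta> a \<in> p \<inter> sqlt d"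
  proof (intro ballI allI)
    fix \<eta> a assume "\<eta> \<in> p \<inter> sqlt d"
    then show "restr \<eta> a \<in> p \<inter> sqlt d" using D(3) restr_sqlt[of \<eta> d a] by blast
  qed
  show "S \<inter> below d \<subseteq> below d" by blast
  show "\<forall>x\<in>S \<inter> below d. strongly_inaccessible x" using D(5) by blast
  show "\<not> stationary d (S \<inter> below d)" using D(7) dk inacc by blast
  show "\<forall>d'<d. strongly_inaccessible d' \<longrightarrow> \<not> stationary d' (S \<inter> below d \<inter> below d')"
  proof (intro allI impI)
    fix d' assume "d' < d" "strongly_inaccessible d'"
    moreover have "S \<inter> below d \<inter> below d' = S \<inter> below d'" using \<open>d' < d\<close> by auto
    ultimately show "\<not> stationary d' (S \<inter> below d \<inter> below d')" using D(7) dk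
      by (metis order.strict_trans)
  qed
  show "l < d" by (rule ld)
  show "\<rho> \<in> sq l" by (rule D(9))
  show "\<forall>a\<le>l. p \<inter> sqlt d \<inter> sq a = {restr \<rho> a}"
  proof (intro allI impI)
    fix a assume "a \<le> l"
    then have "sq a \<subseteq> sqlt d" using ld sq_sqlt by (metis le_less_trans subsetI)
    then show "p \<inter> sqlt d \<inter> sq a = {restr \<rho> a}" using D(10) \<open>a \<le> l\<close> by blast
  qed
  show "\<rho>(l \<mapsto> False) \<in> p \<inter> sqlt d" using D(11) upd_sqlt[OF D(9) limd ld] by blast
  show "\<rho>(l \<mapsto> True) \<in> p \<inter> sqlt d" using D(12) upd_sqlt[OF D(9) limd ld] by blast
  show "\<forall>\<eta>\<in>p \<inter> sqlt d. \<forall>d'. \<eta> \<in> sq d' \<and> \<rho> \<subseteq>\<^sub>m \<eta> \<longrightarrow> \<eta>(d' \<mapsto> False) \<in> p \<inter> sqlt d \<and> \<eta>(d' \<mapsto> True) \<in> p \<inter> sqlt d"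
  proof (intro ballI allI impI)
    fix \<eta> d' assume h: "\<eta> \<in> p \<inter> sqlt d" "\<eta> \<in> sq d' \<and> \<rho> \<subseteq>\<^sub>m \<eta>"
    then have "d' < d" using sq_sqlt_iff by blast
    have "\<eta>(d' \<mapsto> False) \<in> p \<and> \<eta>(d' \<mapsto> True) \<in> p" using D(13) h by blast
    moreover have "\<eta>(d' \<mapsto> x) \<in> sqlt d" for x using upd_sqlt[OF _ limd \<open>d' < d\<close>] h by blast
    ultimately show "\<eta>(d' \<mapsto> False) \<in> p \<inter> sqlt d \<and> \<eta>(d' \<mapsto> True) \<in> p \<inter> sqlt d" by blast
  qed
  show "\<forall>d'<d. d' \<notin> S \<inter> below d \<and> limit_ord d' \<and> l < d' \<longrightarrow>
        (\<forall>\<eta>\<in>sq d'. \<eta> \<in> p \<inter> sqlt d \<longleftrightarrow> (\<forall>a<d'. restr \<eta> a \<in> p \<inter> sqlt d))"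
  proof (intro allI impI ballI)
    fix d' \<eta> assume h: "d' < d" "d' \<notin> S \<inter> below d \<and> limit_ord d' \<and> l < d'" "\<eta> \<in> sq d'"
    then have e: "\<eta> \<in> sqlt d" using sq_sqlt by blast
    have "d' \<notin> S" "d' < \<kappa>" using h dk by auto
    then have "\<eta> \<in> p \<longleftrightarrow> (\<forall>a<d'. restr \<eta> a \<in> p)" using D(14)[rule_format, of d' \<eta>] h by blast
    then show "\<eta> \<in> p \<inter> sqlt d \<longleftrightarrow> (\<forall>a<d'. restr \<eta> a \<in> p \<inter> sqlt d)"
      by (simp add: e restr_sqlt[OF e])
  qed
  show "\<forall>d'\<in>S \<inter> below d. \<Lambda> d' \<lesssim> below d' \<and> (\<forall>I\<in>\<Lambda> d'. dense_open (QQ d') I)"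
    using D(15) by blast
  show "\<forall>d'\<in>S \<inter> below d. l < d' \<longrightarrow> p \<inter> sqlt d \<inter> sqlt d' \<in> QQ d' \<and>
        (\<forall>\<eta>\<in>sq d'. \<eta> \<in> p \<inter> sqlt d \<longleftrightarrow> (\<forall>a<d'. restr \<eta> a \<in> p \<inter> sqlt d) \<and> (\<forall>I\<in>\<Lambda> d'. \<exists>q\<in>I. \<eta> \<in> limd d' q))"
  proof (intro ballI impI)
    fix d' assume h: "d' \<in> S \<inter> below d" "l < d'"
    then have "d' < d" by simp
    then have "p \<inter> sqlt d \<inter> sqlt d' = p \<inter> sqlt d'" using sqlt_mono[of _ d' d] by auto
    moreover have "p \<inter> sqlt d' \<in> QQ d'" using D(16)[rule_format, of d'] h by blast
    ultimately have A: "p \<inter> sqlt d \<inter> sqlt d' \<in> QQ d'" by simp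
    have "\<forall>\<eta>\<in>sq d'. \<eta> \<in> p \<inter> sqlt d \<longleftrightarrow> (\<forall>a<d'. restr \<eta> a \<in> p \<inter> sqlt d) \<and> (\<forall>I\<in>\<Lambda> d'. \<exists>q\<in>I. \<eta> \<in> limd d' q)"
    proof
      fix \<eta> assume "\<eta> \<in> sq d'"
      then have e: "\<eta> \<in> sqlt d" using sq_sqlt \<open>d' < d\<close> by blast
      have "\<eta> \<in> p \<longleftrightarrow> (\<forall>a<d'. restr \<eta> a \<in> p) \<and> (\<forall>I\<in>\<Lambda> d'. \<exists>q\<in>I. \<eta> \<in> limd d' q)"
        using D(16)[rule_format, of d'] h \<open>\<eta> \<in> sq d'\<close> by blast
      then show "\<eta> \<in> p \<inter> sqlt d \<longleftrightarrow> (\<forall>a<d'. restr \<eta> a \<in> p \<inter> sqlt d) \<and> (\<forall>I\<in>\<Lambda> d'. \<exists>q\<in>I. \<eta> \<in> limd d' q)"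
        by (simp add: e restr_sqlt[OF e])
    qed
    with A show "p \<inter> sqlt d \<inter> sqlt d' \<in> QQ d' \<and>
        (\<forall>\<eta>\<in>sq d'. \<eta> \<in> p \<inter> sqlt d \<longleftrightarrow> (\<forall>a<d'. restr \<eta> a \<in> p \<inter> sqlt d) \<and> (\<forall>I\<in>\<Lambda> d'. \<exists>q\<in>I. \<eta> \<in> limd d' q))"
      by (rule conjI)
  qed
qed



definition cone :: "'a::wellorder seq set \<Rightarrow> 'a seq \<Rightarrow> 'a seq set" where
  "cone p \<sigma> = {\<eta>\<in>p. \<eta> \<subseteq>\<^sub>m \<sigma> \<or> \<sigma> \<subseteq>\<^sub>m \<eta>}"

lemma restr_of_ext:
  assumes "\<sigma> \<in> sq m" "\<sigma> \<subseteq>\<^sub>m \<eta>"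
  shows "m \<le> a \<Longrightarrow> \<sigma> \<subseteq>\<^sub>m restr \<eta> a" and "a \<le> m \<Longrightarrow> restr \<eta> a = restr \<sigma> a"
proof -
  assume ma: "m \<le> a"
  show "\<sigma> \<subseteq>\<^sub>m restr \<eta> a" unfolding map_le_def
  proof
    fix x assume x: "x \<in> dom \<sigma>"
    then have "x < a" using assms(1) ma by (simp add: sq_def)
    then show "\<sigma> x = restr \<eta> a x" using x assms(2) by (simp add: restr_app map_le_def)
  qed
next
  assume am: "a \<le> m"
  show "restr \<eta> a = restr \<sigma> a"
  proof (rule ext)
    fix x show "restr \<eta> a x = restr \<sigma> a x"
    proof (cases "x < a")
      case True
      then have "x \<in> dom \<sigma>" using assms(1) am by (simp add: sq_def)
      then show ?thesis using True assms(2) by (simp add: restr_app map_le_def)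
    next
      case False then show ?thesis by (simp add: restr_def)
    qed
  qed
qed

lemma cone_restr:
  assumes p3: "\<forall>\<eta>\<in>p. \<forall>a. restr \<eta> a \<in> p" and \<sigma>: "\<sigma> \<in> sq m" and \<eta>: "\<eta> \<in> cone p \<sigma>"
  shows "restr \<eta> a \<in> cone p \<sigma>"
proof -
  have ep: "\<eta> \<in> p" using \<eta> by (simp add: cone_def)
  then have rp: "restr \<eta> a \<in> p" using p3 by blast
  have "restr \<eta> a \<subseteq>\<^sub>m \<sigma> \<or> \<sigma> \<subseteq>\<^sub>m restr \<eta> a"
  proof (cases "\<eta> \<subseteq>\<^sub>m \<sigma>")
    case True
    then show ?thesis using map_le_trans[OF restr_le True] by blast
  next
    case False
    then have se: "\<sigma> \<subseteq>\<^sub>m \<eta>" using \<eta> by (simp add: cone_def)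
    show ?thesis
    proof (cases "m \<le> a")
      case True then show ?thesis using restr_of_ext(1)[OF \<sigma> se] by blast
    next
      case False
      then have "restr \<eta> a = restr \<sigma> a" using restr_of_ext(2)[OF \<sigma> se] by simp
      then show ?thesis using restr_le[of \<sigma> a] by simp
    qed
  qed
  then show ?thesis using rp by (simp add: cone_def)
qed

lemma cone_sub: "cone p \<sigma> \<subseteq> p" by (auto simp: cone_def)

lemma ext_from_restr:
  assumes "\<eta> \<in> sq d" "m \<le> d" "\<sigma> \<in> sq m" "restr \<eta> m \<in> cone p \<sigma>"
  shows "\<sigma> \<subseteq>\<^sub>m \<eta>"
proof -
  have rs: "restr \<eta> m \<in> sq m" using restr_sq[OF assms(1,2)] .
  have "restr \<eta> m \<subseteq>\<^sub>m \<sigma> \<or> \<sigma> \<subseteq>\<^sub>m restr \<eta> m" using assms(4) by (simp add: cone_def)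
  then show ?thesis
  proof
    assume "restr \<eta> m \<subseteq>\<^sub>m \<sigma>"
    then have "restr \<eta> m = restr \<sigma> m" using map_le_sq[OF rs assms(3)] by blast
    also have "\<dots> = \<sigma>" using restr_id[OF assms(3) order_refl] .
    finally show ?thesis using restr_le[of \<eta> m] by simp
  next
    assume "\<sigma> \<subseteq>\<^sub>m restr \<eta> m"
    then show ?thesis using restr_le[of \<eta> m] map_le_trans by blast
  qed
qed

lemma cone_level:
  assumes p3: "\<forall>\<eta>\<in>p. \<forall>a. restr \<eta> a \<in> p" and \<sigma>p: "\<sigma> \<in> p" and \<sigma>: "\<sigma> \<in> sq m" and am: "a \<le> m"
  shows "cone p \<sigma> \<inter> sq a = {restr \<sigma> a}"
proof
  show "{restr \<sigma> a} \<subseteq> cone p \<sigma> \<inter> sq a"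
  proof -
    have "restr \<sigma> a \<in> p" using p3 \<sigma>p by blast
    moreover have "restr \<sigma> a \<in> sq a" using restr_sq[OF \<sigma> am] .
    ultimately show ?thesis using restr_le[of \<sigma> a] by (simp add: cone_def)
  qed
next
  show "cone p \<sigma> \<inter> sq a \<subseteq> {restr \<sigma> a}"
  proof
    fix \<eta> assume h: "\<eta> \<in> cone p \<sigma> \<inter> sq a"
    then have ea: "\<eta> \<in> sq a" by simp
    have "\<eta> \<subseteq>\<^sub>m \<sigma> \<or> \<sigma> \<subseteq>\<^sub>m \<eta>" using h by (simp add: cone_def)
    then have "\<eta> = restr \<sigma> a"
    proof
      assume "\<eta> \<subseteq>\<^sub>m \<sigma>" then show ?thesis using map_le_sq[OF ea \<sigma>] by blast
    next
      assume se: "\<sigma> \<subseteq>\<^sub>m \<eta>"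
      then have "m \<le> a" "\<sigma> = restr \<eta> m" using map_le_sq[OF \<sigma> ea] by blast+
      then have "a = m" using am by simp
      then have "\<eta> = \<sigma>" using \<open>\<sigma> = restr \<eta> m\<close> restr_id[OF ea, of m] by simp
      then show ?thesis using restr_id[OF \<sigma> order_refl] \<open>a = m\<close> by simp
    qed
    then show "\<eta> \<in> {restr \<sigma> a}" by simp
  qed
qed



lemma W_cone:
  "strongly_inaccessible \<kappa> \<Longrightarrow> W QQ \<kappa> p \<rho> l S \<Lambda> \<Longrightarrow> \<sigma> \<in> p \<Longrightarrow> \<sigma> \<in> sq m \<Longrightarrow> \<rho> \<subseteq>\<^sub>m \<sigma>
   \<Longrightarrow> W QQ \<kappa> (cone p \<sigma>) \<sigma> m S \<Lambda>"
proof (induction \<kappa> arbitrary: p \<rho> l S \<Lambda> \<sigma> m rule: less_induct)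
  case (less \<kappa>)
  note W = less.prems(2)
  note D = W_D[OF W]
  have inacc: "strongly_inaccessible \<kappa>" by (rule less.prems(1))
  have lim: "limit_ord \<kappa>" using inacc_limit[OF inacc] .
  have \<sigma>p: "\<sigma> \<in> p" and \<sigma>m: "\<sigma> \<in> sq m" and r\<sigma>: "\<rho> \<subseteq>\<^sub>m \<sigma>" using less.prems by auto
  have lm: "l \<le> m" using map_le_sq[OF D(9) \<sigma>m r\<sigma>] by blast
  have mk: "m < \<kappa>" using \<sigma>p D(2) sq_sqlt_iff[OF \<sigma>m] by blast
  have sub: "cone p \<sigma> \<subseteq> p" by (rule cone_sub)
  have cr: "\<And>\<eta> a. \<eta> \<in> cone p \<sigma> \<Longrightarrow> restr \<eta> a \<in> cone p \<sigma>" using cone_restr[OF D(3) \<sigma>m] by blast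
  have \<sigma>c: "\<sigma> \<in> cone p \<sigma>" using \<sigma>p by (simp add: cone_def)
  have ext: "\<And>\<eta> d. \<eta> \<in> sq d \<Longrightarrow> m \<le> d \<Longrightarrow> (\<forall>a<d. restr \<eta> a \<in> cone p \<sigma>) \<Longrightarrow> m < d \<Longrightarrow> \<sigma> \<subseteq>\<^sub>m \<eta>"
    using ext_from_restr \<sigma>m by blast
  show ?case
  proof (rule W_I)
    show "cone p \<sigma> \<noteq> {}" using \<sigma>c by blast
    show "cone p \<sigma> \<subseteq> sqlt \<kappa>" using sub D(2) by (rule subset_trans)
    show "\<forall>\<eta>\<in>cone p \<sigma>. \<forall>a. restr \<eta> a \<in> cone p \<sigma>" using cr by blast
    show "S \<subseteq> below \<kappa>" by (rule D(4))
    show "\<forall>d\<in>S. strongly_inaccessible d" by (rule D(5))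
    show "\<not> stationary \<kappa> S" by (rule D(6))
    show "\<forall>d<\<kappa>. strongly_inaccessible d \<longrightarrow> \<not> stationary d (S \<inter> below d)" by (rule D(7))
    show "m < \<kappa>" by (rule mk)
    show "\<sigma> \<in> sq m" by (rule \<sigma>m)
    show "\<forall>a\<le>m. cone p \<sigma> \<inter> sq a = {restr \<sigma> a}" using cone_level[OF D(3) \<sigma>p \<sigma>m] by blast
    have upd: "\<sigma>(m \<mapsto> x) \<in> cone p \<sigma>" for x
    proof -
      have "\<sigma>(m \<mapsto> False) \<in> p \<and> \<sigma>(m \<mapsto> True) \<in> p" using D(13) \<sigma>p \<sigma>m r\<sigma> by blast
      then have "\<sigma>(m \<mapsto> x) \<in> p" by (cases x) auto
      then show ?thesis using upd_le[OF \<sigma>m] by (simp add: cone_def)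
    qed
    show "\<sigma>(m \<mapsto> False) \<in> cone p \<sigma>" by (rule upd)
    show "\<sigma>(m \<mapsto> True) \<in> cone p \<sigma>" by (rule upd)
    show "\<forall>\<eta>\<in>cone p \<sigma>. \<forall>d. \<eta> \<in> sq d \<and> \<sigma> \<subseteq>\<^sub>m \<eta> \<longrightarrow> \<eta>(d \<mapsto> False) \<in> cone p \<sigma> \<and> \<eta>(d \<mapsto> True) \<in> cone p \<sigma>"
    proof (intro ballI allI impI)
      fix \<eta> d assume h: "\<eta> \<in> cone p \<sigma>" "\<eta> \<in> sq d \<and> \<sigma> \<subseteq>\<^sub>m \<eta>"
      have "\<rho> \<subseteq>\<^sub>m \<eta>" using map_le_trans r\<sigma> h(2) by blast
      then have "\<eta>(d \<mapsto> False) \<in> p \<and> \<eta>(d \<mapsto> True) \<in> p" using D(13) h sub by blast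
      moreover have "\<sigma> \<subseteq>\<^sub>m \<eta>(d \<mapsto> x)" for x using map_le_trans[OF _ upd_le] h(2) by blast
      ultimately show "\<eta>(d \<mapsto> False) \<in> cone p \<sigma> \<and> \<eta>(d \<mapsto> True) \<in> cone p \<sigma>" by (simp add: cone_def)
    qed
    show "\<forall>d<\<kappa>. d \<notin> S \<and> limit_ord d \<and> m < d \<longrightarrow>
        (\<forall>\<eta>\<in>sq d. \<eta> \<in> cone p \<sigma> \<longleftrightarrow> (\<forall>a<d. restr \<eta> a \<in> cone p \<sigma>))"
    proof (intro allI impI ballI iffI)
      fix d \<eta> a assume "\<eta> \<in> cone p \<sigma>" then show "restr \<eta> a \<in> cone p \<sigma>" using cr by blast
    next
      fix d \<eta> assume h: "d < \<kappa>" "d \<notin> S \<and> limit_ord d \<and> m < d" "\<eta> \<in> sq d" "\<forall>a<d. restr \<eta> a \<in> cone p \<sigma>"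
      have "l < d" using lm h(2) by (meson le_less_trans)
      then have "\<eta> \<in> p" using D(14)[rule_format, of d \<eta>] h sub by blast
      moreover have "\<sigma> \<subseteq>\<^sub>m \<eta>" using ext[OF h(3) _ h(4)] h(2) by (simp add: less_imp_le)
      ultimately show "\<eta> \<in> cone p \<sigma>" by (simp add: cone_def)
    qed
    show "\<forall>d\<in>S. \<Lambda> d \<lesssim> below d \<and> (\<forall>I\<in>\<Lambda> d. dense_open (QQ d) I)" by (rule D(15))
    show "\<forall>d\<in>S. m < d \<longrightarrow> cone p \<sigma> \<inter> sqlt d \<in> QQ d \<and>
        (\<forall>\<eta>\<in>sq d. \<eta> \<in> cone p \<sigma> \<longleftrightarrow> (\<forall>a<d. restr \<eta> a \<in> cone p \<sigma>) \<and> (\<forall>I\<in>\<Lambda> d. \<exists>q\<in>I. \<eta> \<in> limd d q))"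
    proof (intro ballI impI)
      fix d assume dS: "d \<in> S" and md: "m < d"
      have dk: "d < \<kappa>" using dS D(4) by auto
      have di: "strongly_inaccessible d" using dS D(5) by blast
      have ld: "l < d" using lm md by (meson le_less_trans)
      have Wd: "W QQ d (p \<inter> sqlt d) \<rho> l (S \<inter> below d) \<Lambda>" using W_restrict[OF W di ld dk] .
      have "\<sigma> \<in> p \<inter> sqlt d" using \<sigma>p sq_sqlt[OF \<sigma>m md] by blast
      then have "W QQ d (cone (p \<inter> sqlt d) \<sigma>) \<sigma> m (S \<inter> below d) \<Lambda>"
        using less.IH[OF dk di Wd _ \<sigma>m r\<sigma>] by blast
      moreover have "cone (p \<inter> sqlt d) \<sigma> = cone p \<sigma> \<inter> sqlt d" by (auto simp: cone_def)
      ultimately have A: "cone p \<sigma> \<inter> sqlt d \<in> QQ d" using QQ_iff by metis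
      have B: "\<forall>\<eta>\<in>sq d. \<eta> \<in> cone p \<sigma> \<longleftrightarrow> (\<forall>a<d. restr \<eta> a \<in> cone p \<sigma>) \<and> (\<forall>I\<in>\<Lambda> d. \<exists>q\<in>I. \<eta> \<in> limd d q)"
      proof (intro ballI iffI)
        fix \<eta> assume e: "\<eta> \<in> sq d" and c: "\<eta> \<in> cone p \<sigma>"
        have "\<eta> \<in> p" using c sub by blast
        then have "\<forall>I\<in>\<Lambda> d. \<exists>q\<in>I. \<eta> \<in> limd d q" using D(16)[rule_format, OF dS ld] e by blast
        then show "(\<forall>a<d. restr \<eta> a \<in> cone p \<sigma>) \<and> (\<forall>I\<in>\<Lambda> d. \<exists>q\<in>I. \<eta> \<in> limd d q)" using cr c by blast
      next
        fix \<eta> assume e: "\<eta> \<in> sq d" and c: "(\<forall>a<d. restr \<eta> a \<in> cone p \<sigma>) \<and> (\<forall>I\<in>\<Lambda> d. \<exists>q\<in>I. \<eta> \<in> limd d q)"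
        have "\<forall>a<d. restr \<eta> a \<in> p" using c sub by blast
        then have "\<eta> \<in> p" using D(16)[rule_format, OF dS ld] e c by blast
        moreover have "\<sigma> \<subseteq>\<^sub>m \<eta>" using ext[OF e _ _ md] c md by (simp add: less_imp_le)
        ultimately show "\<eta> \<in> cone p \<sigma>" by (simp add: cone_def)
      qed
      show "cone p \<sigma> \<inter> sqlt d \<in> QQ d \<and>
        (\<forall>\<eta>\<in>sq d. \<eta> \<in> cone p \<sigma> \<longleftrightarrow> (\<forall>a<d. restr \<eta> a \<in> cone p \<sigma>) \<and> (\<forall>I\<in>\<Lambda> d. \<exists>q\<in>I. \<eta> \<in> limd d q))"
        using A B by (rule conjI)
    qed
  qed
qed



definition Hs :: "'a::wellorder \<Rightarrow> 'a \<Rightarrow> 'a seq set" where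
  "Hs \<kappa> \<mu> = {\<nu>. \<exists>\<alpha>. \<mu> \<le> \<alpha> \<and> \<alpha> < \<kappa> \<and> \<nu> \<alpha> = Some True}"

definition KK :: "'a::wellorder \<Rightarrow> 'a \<Rightarrow> 'a seq set set" where
  "KK \<kappa> \<mu> = {q \<in> QQ \<kappa>. limd \<kappa> q \<subseteq> Hs \<kappa> \<mu>}"

lemma limd_mono: "q \<subseteq> p \<Longrightarrow> limd \<kappa> q \<subseteq> limd \<kappa> p"
  unfolding limd_def by blast

lemma W_in_QQ: "W QQ \<kappa> p \<rho> l S \<Lambda> \<Longrightarrow> p \<in> QQ \<kappa>"
  using QQ_iff by blast

lemma K_dense:
  assumes inacc: "strongly_inaccessible \<kappa>" and \<mu>k: "\<mu> < \<kappa>"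
  shows "dense_open (QQ \<kappa>) (KK \<kappa> \<mu>)"
  unfolding dense_open_def
proof (intro conjI ballI impI)
  show "KK \<kappa> \<mu> \<subseteq> QQ \<kappa>" by (auto simp: KK_def)
next
  fix p q assume "p \<in> KK \<kappa> \<mu>" "q \<in> QQ \<kappa>" "q \<subseteq> p"
  then show "q \<in> KK \<kappa> \<mu>" using limd_mono[of q p \<kappa>] by (auto simp: KK_def)
next
  fix p assume "p \<in> QQ \<kappa>"
  then obtain \<rho> l S \<Lambda> where W: "W QQ \<kappa> p \<rho> l S \<Lambda>" using QQ_iff by blast
  note D = W_D[OF W]
  have lim: "limit_ord \<kappa>" using inacc_limit[OF inacc] .
  show "\<exists>q\<in>KK \<kappa> \<mu>. q \<subseteq> p"
  proof (cases "\<exists>\<tau> m. \<tau> \<in> p \<and> \<mu> \<le> m \<and> \<tau> \<in> sq m \<and> \<rho> \<subseteq>\<^sub>m \<tau>")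
    case True
    then obtain \<tau> m where \<tau>: "\<tau> \<in> p" "\<mu> \<le> m" "\<tau> \<in> sq m" "\<rho> \<subseteq>\<^sub>m \<tau>" by blast
    define \<sigma> where "\<sigma> = \<tau>(m \<mapsto> True)"
    have \<sigma>p: "\<sigma> \<in> p" using D(13) \<tau> unfolding \<sigma>_def by blast
    then obtain m' where m': "m' < \<kappa>" "\<sigma> \<in> sq m'" using D(2) sqlt_iff by blast
    have r\<sigma>: "\<rho> \<subseteq>\<^sub>m \<sigma>" unfolding \<sigma>_def using map_le_trans[OF \<tau>(4) upd_le[OF \<tau>(3)]] .
    have Wc: "W QQ \<kappa> (cone p \<sigma>) \<sigma> m' S \<Lambda>" using W_cone[OF inacc W \<sigma>p m'(2) r\<sigma>] .
    have mm': "m < m'" using succ_level[OF m'(2)] upd_dom[OF \<tau>(3)] unfolding \<sigma>_def by blast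
    have "limd \<kappa> (cone p \<sigma>) \<subseteq> Hs \<kappa> \<mu>"
    proof
      fix \<eta> assume "\<eta> \<in> limd \<kappa> (cone p \<sigma>)"
      then have e: "\<eta> \<in> sq \<kappa>" "restr \<eta> m' \<in> cone p \<sigma>" using m'(1) by (auto simp: limd_def)
      have "restr \<eta> m' \<in> sq m'" using restr_sq[OF e(1)] m'(1) by simp
      then have "restr \<eta> m' \<in> cone p \<sigma> \<inter> sq m'" using e(2) by blast
      also have "\<dots> = {restr \<sigma> m'}" using cone_level[OF D(3) \<sigma>p m'(2) order_refl] .
      also have "\<dots> = {\<sigma>}" using restr_id[OF m'(2) order_refl] by simp
      finally have "restr \<eta> m' = \<sigma>" by simp
      then have "\<eta> m = Some True" using restr_app[OF mm', of \<eta>] unfolding \<sigma>_def by simp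
      moreover have "m < \<kappa>" using mm' m'(1) by (rule less_trans)
      ultimately show "\<eta> \<in> Hs \<kappa> \<mu>" using \<tau>(2) by (auto simp: Hs_def)
    qed
    then have "cone p \<sigma> \<in> KK \<kappa> \<mu>" using W_in_QQ[OF Wc] by (simp add: KK_def)
    then show ?thesis using cone_sub by blast
  next
    case False
    have "limd \<kappa> p = {}"
    proof (rule ccontr)
      assume "limd \<kappa> p \<noteq> {}"
      then obtain \<eta> where \<eta>: "\<eta> \<in> limd \<kappa> p" by blast
      have \<rho>p: "\<rho> \<in> p" using W_stem_in[OF W] .
      have l\<mu>: "l < \<mu>"
      proof (rule ccontr)
        assume "\<not> l < \<mu>"
        then have "\<mu> \<le> l" by simp
        then show False using False \<rho>p D(9) map_le_refl by blast
      qed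
      have e: "\<eta> \<in> sq \<kappa>" "restr \<eta> \<mu> \<in> p" using \<eta> \<mu>k by (auto simp: limd_def)
      have t\<mu>: "restr \<eta> \<mu> \<in> sq \<mu>" using restr_sq[OF e(1)] \<mu>k by simp
      have "restr (restr \<eta> \<mu>) l \<in> p" using D(3) e(2) by blast
      moreover have "restr (restr \<eta> \<mu>) l \<in> sq l" using restr_sq[OF t\<mu>] l\<mu> by simp
      ultimately have "restr (restr \<eta> \<mu>) l \<in> p \<inter> sq l" by blast
      also have "\<dots> = {restr \<rho> l}" using D(10)[rule_format, OF order_refl] .
      also have "\<dots> = {\<rho>}" using restr_id[OF D(9) order_refl] by simp
      finally have "restr (restr \<eta> \<mu>) l = \<rho>" by simp
      then have "\<rho> \<subseteq>\<^sub>m restr \<eta> \<mu>" using restr_le[of "restr \<eta> \<mu>" l] by simp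
      then show False using False e(2) t\<mu> by blast
    qed
    then have "p \<in> KK \<kappa> \<mu>" using \<open>p \<in> QQ \<kappa>\<close> by (simp add: KK_def)
    then show ?thesis by blast
  qed
qed



definition cutp :: "'a::wellorder set \<Rightarrow> ('a \<Rightarrow> 'a seq set set) \<Rightarrow> 'a \<Rightarrow> 'a seq set \<Rightarrow> 'a seq set" where
  "cutp Ds K l p = {\<eta>\<in>p. \<forall>\<delta>\<in>Ds. l < \<delta> \<and> below \<delta> \<subseteq> dom \<eta> \<longrightarrow> (\<exists>q\<in>K \<delta>. restr \<eta> \<delta> \<in> limd \<delta> q)}"

definition CC :: "'a::wellorder set \<Rightarrow> ('a \<Rightarrow> 'a seq set set) \<Rightarrow> 'a \<Rightarrow> 'a seq \<Rightarrow> bool" where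
  "CC Ds K l \<eta> \<longleftrightarrow> (\<forall>\<delta>\<in>Ds. l < \<delta> \<and> below \<delta> \<subseteq> dom \<eta> \<longrightarrow> (\<exists>q\<in>K \<delta>. restr \<eta> \<delta> \<in> limd \<delta> q))"

lemma cutp_iff: "\<eta> \<in> cutp Ds K l p \<longleftrightarrow> \<eta> \<in> p \<and> CC Ds K l \<eta>"
  by (simp add: cutp_def CC_def)

lemma below_sub: "below \<delta> \<subseteq> below (d::'a::wellorder) \<Longrightarrow> \<delta> \<le> d"
  by (metis below_iff leI less_irrefl subsetD)

lemma CC_restr: "CC Ds K l \<eta> \<Longrightarrow> CC Ds K l (restr \<eta> a)"
  unfolding CC_def
proof (intro ballI impI)
  fix \<delta> assume h: "\<forall>\<delta>\<in>Ds. l < \<delta> \<and> below \<delta> \<subseteq> dom \<eta> \<longrightarrow> (\<exists>q\<in>K \<delta>. restr \<eta> \<delta> \<in> limd \<delta> q)"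
    "\<delta> \<in> Ds" "l < \<delta> \<and> below \<delta> \<subseteq> dom (restr \<eta> a)"
  then have "below \<delta> \<subseteq> dom \<eta>" "below \<delta> \<subseteq> below a" by (auto simp: dom_restr)
  then have "\<delta> \<le> a" using below_sub by blast
  then have "restr (restr \<eta> a) \<delta> = restr \<eta> \<delta>" by (simp add: restr_restr min_absorb2)
  then show "\<exists>q\<in>K \<delta>. restr (restr \<eta> a) \<delta> \<in> limd \<delta> q" using h \<open>below \<delta> \<subseteq> dom \<eta>\<close> by simp
qed

lemma not_below_sub_atMost: "limit_ord \<delta> \<Longrightarrow> d < \<delta> \<Longrightarrow> \<not> below \<delta> \<subseteq> {b. b \<le> d}"
  by (metis limit_between below_iff mem_Collect_eq not_le subsetD)

lemma CC_short: "\<forall>\<delta>\<in>Ds. limit_ord \<delta> \<Longrightarrow> dom \<eta> \<subseteq> {b. b \<le> l} \<Longrightarrow> CC Ds K l \<eta>"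
  unfolding CC_def
proof (intro ballI impI)
  fix \<delta> assume h: "\<forall>\<delta>\<in>Ds. limit_ord \<delta>" "dom \<eta> \<subseteq> {b. b \<le> l}" "\<delta> \<in> Ds" "l < \<delta> \<and> below \<delta> \<subseteq> dom \<eta>"
  then have "below \<delta> \<subseteq> {b. b \<le> l}" by blast
  then show "\<exists>q\<in>K \<delta>. restr \<eta> \<delta> \<in> limd \<delta> q" using not_below_sub_atMost[of \<delta> l] h by blast
qed

lemma CC_upd:
  assumes "\<forall>\<delta>\<in>Ds. limit_ord \<delta>" "\<eta> \<in> sq d" "CC Ds K l \<eta>"
  shows "CC Ds K l (\<eta>(d \<mapsto> x))"
  unfolding CC_def
proof (intro ballI impI)
  fix \<delta> assume h: "\<delta> \<in> Ds" "l < \<delta> \<and> below \<delta> \<subseteq> dom (\<eta>(d \<mapsto> x))"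
  have "\<not> d < \<delta>" using not_below_sub_atMost[of \<delta> d] assms(1) h upd_dom[OF assms(2)] by blast
  then have "\<delta> \<le> d" by simp
  then have "below \<delta> \<subseteq> dom \<eta>" using assms(2) by (auto simp: sq_def)
  moreover have "restr (\<eta>(d \<mapsto> x)) \<delta> = restr \<eta> \<delta>" using restr_upd[OF assms(2) \<open>\<delta> \<le> d\<close>] .
  ultimately show "\<exists>q\<in>K \<delta>. restr (\<eta>(d \<mapsto> x)) \<delta> \<in> limd \<delta> q" using assms(3) h unfolding CC_def by simp
qed

lemma CC_from:
  assumes "\<eta> \<in> sq d" "\<forall>a<d. CC Ds K l (restr \<eta> a)"
    and "d \<in> Ds \<and> l < d \<longrightarrow> (\<exists>q\<in>K d. \<eta> \<in> limd d q)"
  shows "CC Ds K l \<eta>"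
  unfolding CC_def
proof (intro ballI impI)
  fix \<delta> assume h: "\<delta> \<in> Ds" "l < \<delta> \<and> below \<delta> \<subseteq> dom \<eta>"
  then have "below \<delta> \<subseteq> below d" using assms(1) by (simp add: sq_def)
  then have "\<delta> \<le> d" by (rule below_sub)
  show "\<exists>q\<in>K \<delta>. restr \<eta> \<delta> \<in> limd \<delta> q"
  proof (cases "\<delta> = d")
    case True
    then show ?thesis using assms(3) h restr_id[OF assms(1) order_refl] by simp
  next
    case False
    then have "\<delta> < d" using \<open>\<delta> \<le> d\<close> by simp
    then have "CC Ds K l (restr \<eta> \<delta>)" using assms(2) by blast
    moreover have "below \<delta> \<subseteq> dom (restr \<eta> \<delta>)" using h by (auto simp: dom_restr)
    ultimately have "\<exists>q\<in>K \<delta>. restr (restr \<eta> \<delta>) \<delta> \<in> limd \<delta> q" using h unfolding CC_def by blast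
    then show ?thesis by (simp add: restr_restr)
  qed
qed

lemma CC_at:
  assumes "CC Ds K l \<eta>" "\<eta> \<in> sq d" "d \<in> Ds" "l < d"
  shows "\<exists>q\<in>K d. \<eta> \<in> limd d q"
proof -
  have "below d \<subseteq> dom \<eta>" using assms(2) by (simp add: sq_def)
  then have "\<exists>q\<in>K d. restr \<eta> d \<in> limd d q" using assms(1,3,4) unfolding CC_def by blast
  then show ?thesis using restr_id[OF assms(2) order_refl] by simp
qed

lemma insert_lepoll_below:
  assumes "A \<lesssim> below (d::'a::wellorder)" "infinite (below d)"
  shows "insert x A \<lesssim> below d"
proof -
  have "d \<notin> below d" by simp
  then have "insert x A \<lesssim> insert d (below d)" using insert_lepoll_cong[OF assms(1)] by blast
  also have "insert d (below d) \<lesssim> below d" using infinite_insert_lepoll[OF assms(2)] .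
  finally show ?thesis .
qed



lemma W_cut:
  assumes hD: "\<forall>\<delta>\<in>Ds. strongly_inaccessible \<delta>" and hK: "\<forall>\<delta>\<in>Ds. dense_open (QQ \<delta>) (K \<delta>)"
    and hN: "\<forall>k. strongly_inaccessible k \<longrightarrow> \<not> stationary k (Ds \<inter> below k)"
  shows "strongly_inaccessible \<kappa> \<Longrightarrow> W QQ \<kappa> p \<rho> l S \<Lambda> \<Longrightarrow>
    W QQ \<kappa> (cutp Ds K l p) \<rho> l (S \<union> {\<delta>\<in>Ds. l < \<delta> \<and> \<delta> < \<kappa>})
      (\<lambda>\<delta>. if \<delta> \<in> Ds \<and> l < \<delta> then insert (K \<delta>) (if \<delta> \<in> S then \<Lambda> \<delta> else {}) else \<Lambda> \<delta>)"
proof (induction \<kappa> arbitrary: p \<rho> l S \<Lambda> rule: less_induct)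
  case (less \<kappa>)
  note W = less.prems(2)
  note D = W_D[OF W]
  have inacc: "strongly_inaccessible \<kappa>" by (rule less.prems(1))
  have lim: "limit_ord \<kappa>" using inacc_limit[OF inacc] .
  have Dlim: "\<forall>\<delta>\<in>Ds. limit_ord \<delta>" using hD inacc_limit by blast
  define q where "q = cutp Ds K l p"
  define S' where "S' = S \<union> {\<delta>\<in>Ds. l < \<delta> \<and> \<delta> < \<kappa>}"
  define \<Lambda>' where "\<Lambda>' = (\<lambda>\<delta>. if \<delta> \<in> Ds \<and> l < \<delta> then insert (K \<delta>) (if \<delta> \<in> S then \<Lambda> \<delta> else {}) else \<Lambda> \<delta>)"
  have qiff: "\<And>\<eta>. \<eta> \<in> q \<longleftrightarrow> \<eta> \<in> p \<and> CC Ds K l \<eta>" unfolding q_def by (rule cutp_iff)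
  have qsub: "q \<subseteq> p" using qiff by blast
  have qr: "\<And>\<eta> a. \<eta> \<in> q \<Longrightarrow> restr \<eta> a \<in> q" using qiff D(3) CC_restr by blast
  have rq: "CC Ds K l \<eta>" if "\<eta> \<in> sq d" "\<forall>a<d. restr \<eta> a \<in> q"
      "d \<in> Ds \<and> l < d \<longrightarrow> (\<exists>q\<in>K d. \<eta> \<in> limd d q)" for \<eta> d
  proof -
    have "\<forall>a<d. CC Ds K l (restr \<eta> a)" using that(2) qiff by blast
    then show ?thesis using CC_from[of \<eta> d Ds K l] that(1,3) by blast
  qed
  have short: "\<eta> \<in> p \<Longrightarrow> dom \<eta> \<subseteq> {b. b \<le> l} \<Longrightarrow> \<eta> \<in> q" for \<eta>
    using qiff CC_short[OF Dlim] by blast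
  have "W QQ \<kappa> q \<rho> l S' \<Lambda>'"
  proof (rule W_I)
    have "dom \<rho> \<subseteq> {b. b \<le> l}" using D(9) by (auto simp: sq_def)
    then have "\<rho> \<in> q" using short[OF W_stem_in[OF W]] by blast
    then show "q \<noteq> {}" by blast
    show "q \<subseteq> sqlt \<kappa>" using qsub D(2) by (rule subset_trans)
    show "\<forall>\<eta>\<in>q. \<forall>a. restr \<eta> a \<in> q" using qr by blast
    show "S' \<subseteq> below \<kappa>" using D(4) by (auto simp: S'_def)
    show "\<forall>d\<in>S'. strongly_inaccessible d" using D(5) hD by (auto simp: S'_def)
    have "S' \<subseteq> S \<union> (Ds \<inter> below \<kappa>)" by (auto simp: S'_def)
    then show "\<not> stationary \<kappa> S'" using nonstat_union[OF inacc D(6)] hN inacc nonstat_subset by blast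
    show "\<forall>d<\<kappa>. strongly_inaccessible d \<longrightarrow> \<not> stationary d (S' \<inter> below d)"
    proof (intro allI impI)
      fix d assume "d < \<kappa>" "strongly_inaccessible d"
      then have "\<not> stationary d (S \<inter> below d \<union> Ds \<inter> below d)"
        using nonstat_union D(7) hN by blast
      moreover have "S' \<inter> below d \<subseteq> S \<inter> below d \<union> Ds \<inter> below d" by (auto simp: S'_def)
      ultimately show "\<not> stationary d (S' \<inter> below d)" using nonstat_subset by blast
    qed
    show "l < \<kappa>" by (rule D(8))
    show "\<rho> \<in> sq l" by (rule D(9))
    show "\<forall>a\<le>l. q \<inter> sq a = {restr \<rho> a}"
    proof (intro allI impI)
      fix a assume al: "a \<le> l"
      have "q \<inter> sq a = p \<inter> sq a"
      proof
        show "q \<inter> sq a \<subseteq> p \<inter> sq a" using qsub by blast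
        show "p \<inter> sq a \<subseteq> q \<inter> sq a"
        proof
          fix \<eta> assume "\<eta> \<in> p \<inter> sq a"
          moreover then have "dom \<eta> \<subseteq> {b. b \<le> l}" using al by (auto simp: sq_def)
          ultimately show "\<eta> \<in> q \<inter> sq a" using short by blast
        qed
      qed
      then show "q \<inter> sq a = {restr \<rho> a}" using D(10) al by simp
    qed
    have upd: "\<eta>(d \<mapsto> x) \<in> q" if "\<eta> \<in> q" "\<eta> \<in> sq d" "\<eta>(d \<mapsto> x) \<in> p" for \<eta> d x
      using qiff that CC_upd[OF Dlim that(2)] by blast
    have "\<rho>(l \<mapsto> x) \<in> q" for x
    proof -
      have "\<rho>(l \<mapsto> x) \<in> p" using D(11,12) by (cases x) auto
      moreover have "dom (\<rho>(l \<mapsto> x)) \<subseteq> {b. b \<le> l}" using upd_dom[OF D(9)] by simp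
      ultimately show ?thesis using short by blast
    qed
    then show "\<rho>(l \<mapsto> False) \<in> q" "\<rho>(l \<mapsto> True) \<in> q" by blast+
    show "\<forall>\<eta>\<in>q. \<forall>d. \<eta> \<in> sq d \<and> \<rho> \<subseteq>\<^sub>m \<eta> \<longrightarrow> \<eta>(d \<mapsto> False) \<in> q \<and> \<eta>(d \<mapsto> True) \<in> q"
    proof (intro ballI allI impI)
      fix \<eta> d assume h: "\<eta> \<in> q" "\<eta> \<in> sq d \<and> \<rho> \<subseteq>\<^sub>m \<eta>"
      then have "\<eta>(d \<mapsto> False) \<in> p \<and> \<eta>(d \<mapsto> True) \<in> p" using D(13) qsub by blast
      then show "\<eta>(d \<mapsto> False) \<in> q \<and> \<eta>(d \<mapsto> True) \<in> q" using upd h by blast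
    qed
    show "\<forall>d<\<kappa>. d \<notin> S' \<and> limit_ord d \<and> l < d \<longrightarrow> (\<forall>\<eta>\<in>sq d. \<eta> \<in> q \<longleftrightarrow> (\<forall>a<d. restr \<eta> a \<in> q))"
    proof (intro allI impI ballI iffI)
      fix d \<eta> a assume "\<eta> \<in> q" then show "restr \<eta> a \<in> q" using qr by blast
    next
      fix d \<eta> assume h: "d < \<kappa>" "d \<notin> S' \<and> limit_ord d \<and> l < d" "\<eta> \<in> sq d" "\<forall>a<d. restr \<eta> a \<in> q"
      have "d \<notin> S" using h(2) by (simp add: S'_def)
      then have "\<eta> \<in> p" using D(14)[rule_format, of d \<eta>] h qsub by blast
      moreover have "\<not> (d \<in> Ds \<and> l < d)" using h(1,2) by (auto simp: S'_def)
      then have "CC Ds K l \<eta>" using rq[OF h(3) h(4)] by blast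
      ultimately show "\<eta> \<in> q" using qiff by blast
    qed
    show "\<forall>d\<in>S'. \<Lambda>' d \<lesssim> below d \<and> (\<forall>I\<in>\<Lambda>' d. dense_open (QQ d) I)"
    proof
      fix d assume dS: "d \<in> S'"
      show "\<Lambda>' d \<lesssim> below d \<and> (\<forall>I\<in>\<Lambda>' d. dense_open (QQ d) I)"
      proof (cases "d \<in> Ds \<and> l < d")
        case True
        have inf: "infinite (below d)" using hD True inacc_infinite by blast
        define X where "X = (if d \<in> S then \<Lambda> d else {})"
        have X: "X \<lesssim> below d \<and> (\<forall>I\<in>X. dense_open (QQ d) I)" using D(15) by (simp add: X_def)
        have "\<Lambda>' d = insert (K d) X" using True by (simp add: \<Lambda>'_def X_def)
        then show ?thesis using X insert_lepoll_below[OF _ inf] hK True by auto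
      next
        case False
        then have "d \<in> S" using dS by (auto simp: S'_def)
        have "\<Lambda>' d = \<Lambda> d" unfolding \<Lambda>'_def by (rule if_not_P[OF False])
        then show ?thesis using \<open>d \<in> S\<close> D(15) by simp
      qed
    qed
    show "\<forall>d\<in>S'. l < d \<longrightarrow> q \<inter> sqlt d \<in> QQ d \<and>
        (\<forall>\<eta>\<in>sq d. \<eta> \<in> q \<longleftrightarrow> (\<forall>a<d. restr \<eta> a \<in> q) \<and> (\<forall>I\<in>\<Lambda>' d. \<exists>q\<in>I. \<eta> \<in> limd d q))"
    proof (intro ballI impI)
      fix d assume dS: "d \<in> S'" and ld: "l < d"
      have dk: "d < \<kappa>" using dS D(4) by (auto simp: S'_def)
      have di: "strongly_inaccessible d" using dS D(5) hD by (auto simp: S'_def)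
      have dlim: "limit_ord d" using inacc_limit[OF di] .
      have Wd: "W QQ d (p \<inter> sqlt d) \<rho> l (S \<inter> below d) \<Lambda>" using W_restrict[OF W di ld dk] .
      have Wc: "W QQ d (cutp Ds K l (p \<inter> sqlt d)) \<rho> l (S \<inter> below d \<union> {\<delta>\<in>Ds. l < \<delta> \<and> \<delta> < d})
          (\<lambda>\<delta>. if \<delta> \<in> Ds \<and> l < \<delta> then insert (K \<delta>) (if \<delta> \<in> S \<inter> below d then \<Lambda> \<delta> else {}) else \<Lambda> \<delta>)"
        using less.IH[OF dk di Wd] .
      have eq: "cutp Ds K l (p \<inter> sqlt d) = q \<inter> sqlt d" by (auto simp: qiff cutp_iff)
      have A: "q \<inter> sqlt d \<in> QQ d" using W_in_QQ[OF Wc] unfolding eq .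
      have B: "\<forall>\<eta>\<in>sq d. \<eta> \<in> q \<longleftrightarrow> (\<forall>a<d. restr \<eta> a \<in> q) \<and> (\<forall>I\<in>\<Lambda>' d. \<exists>q\<in>I. \<eta> \<in> limd d q)"
      proof (intro ballI iffI)
        fix \<eta> assume e: "\<eta> \<in> sq d" and c: "\<eta> \<in> q"
        have ep: "\<eta> \<in> p" and cc: "CC Ds K l \<eta>" using c qiff by auto
        have K1: "d \<in> Ds \<Longrightarrow> \<exists>q\<in>K d. \<eta> \<in> limd d q" using CC_at[OF cc e _ ld] by blast
        have L1: "\<forall>I\<in>\<Lambda> d. \<exists>q\<in>I. \<eta> \<in> limd d q" if "d \<in> S"
          using conjunct2[OF D(16)[rule_format, OF that ld], rule_format, OF e] ep by blast
        have "\<forall>I\<in>\<Lambda>' d. \<exists>q\<in>I. \<eta> \<in> limd d q"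
        proof
          fix I assume I: "I \<in> \<Lambda>' d"
          show "\<exists>q\<in>I. \<eta> \<in> limd d q"
          proof (cases "d \<in> Ds")
            case True
            then have "I = K d \<or> (d \<in> S \<and> I \<in> \<Lambda> d)" using I ld by (auto simp: \<Lambda>'_def split: if_splits)
            then show ?thesis using K1 L1 True by blast
          next
            case False
            then have "d \<in> S" "I \<in> \<Lambda> d" using I dS by (auto simp: \<Lambda>'_def S'_def)
            then show ?thesis using L1 by blast
          qed
        qed
        then show "(\<forall>a<d. restr \<eta> a \<in> q) \<and> (\<forall>I\<in>\<Lambda>' d. \<exists>q\<in>I. \<eta> \<in> limd d q)" using qr c by blast
      next
        fix \<eta> assume e: "\<eta> \<in> sq d" and c: "(\<forall>a<d. restr \<eta> a \<in> q) \<and> (\<forall>I\<in>\<Lambda>' d. \<exists>q\<in>I. \<eta> \<in> limd d q)"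
        have rp: "\<forall>a<d. restr \<eta> a \<in> p" using c qsub by blast
        have K1: "d \<in> Ds \<and> l < d \<longrightarrow> (\<exists>q\<in>K d. \<eta> \<in> limd d q)"
        proof
          assume "d \<in> Ds \<and> l < d"
          then have "K d \<in> \<Lambda>' d" by (simp add: \<Lambda>'_def)
          then show "\<exists>q\<in>K d. \<eta> \<in> limd d q" using c by blast
        qed
        have cc: "CC Ds K l \<eta>" using rq[OF e _ K1] c by blast
        have "\<eta> \<in> p"
        proof (cases "d \<in> S")
          case True
          have "\<forall>I\<in>\<Lambda> d. \<exists>q\<in>I. \<eta> \<in> limd d q"
          proof
            fix I assume "I \<in> \<Lambda> d"
            then have "I \<in> \<Lambda>' d" using True by (simp add: \<Lambda>'_def)
            then show "\<exists>q\<in>I. \<eta> \<in> limd d q" using c by blast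
          qed
          then show ?thesis using conjunct2[OF D(16)[rule_format, OF True ld], rule_format, OF e] rp by blast
        next
          case False
          have h3: "d \<notin> S \<and> limit_ord d \<and> l < d" using False dlim ld by blast
          show ?thesis using D(14)[rule_format, OF dk h3 e] rp by blast
        qed
        then show "\<eta> \<in> q" using qiff cc by blast
      qed
      show "q \<inter> sqlt d \<in> QQ d \<and>
        (\<forall>\<eta>\<in>sq d. \<eta> \<in> q \<longleftrightarrow> (\<forall>a<d. restr \<eta> a \<in> q) \<and> (\<forall>I\<in>\<Lambda>' d. \<exists>q\<in>I. \<eta> \<in> limd d q))"
        using A B by (rule conjI)
    qed
  qed
  then show ?case unfolding q_def S'_def \<Lambda>'_def .
qed



definition muf :: "'a::wellorder \<Rightarrow> 'a" where
  "muf \<delta> = (LEAST a. a < \<delta> \<and> (\<forall>i. strongly_inaccessible i \<and> i < \<delta> \<longrightarrow> i \<le> a))"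

definition Kf :: "'a::wellorder \<Rightarrow> 'a seq set set" where
  "Kf \<delta> = KK \<delta> (muf \<delta>)"

lemma muf_prop:
  assumes "\<delta> \<in> DD lam"
  shows "muf \<delta> < \<delta> \<and> (\<forall>i. strongly_inaccessible i \<and> i < \<delta> \<longrightarrow> i \<le> muf \<delta>)"
proof -
  have "\<exists>a. a < \<delta> \<and> (\<forall>i. strongly_inaccessible i \<and> i < \<delta> \<longrightarrow> i \<le> a)" using assms by (auto simp: DD_def)
  then show ?thesis unfolding muf_def by (rule LeastI_ex)
qed

lemma DD_inacc: "\<delta> \<in> DD lam \<Longrightarrow> strongly_inaccessible \<delta>" by (simp add: DD_def)

lemma DD_lt: "\<delta> \<in> DD lam \<Longrightarrow> \<delta> < lam" by (simp add: DD_def)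

lemma Kf_dense: "\<delta> \<in> DD lam \<Longrightarrow> dense_open (QQ \<delta>) (Kf \<delta>)"
  unfolding Kf_def using K_dense DD_inacc muf_prop by blast

lemma DD_cofinal:
  assumes lim2: "\<forall>a<lam. \<exists>d. a < d \<and> d < lam \<and> strongly_inaccessible d"
    and "\<beta> < lam" "a < lam"
  shows "\<exists>\<delta>\<in>DD lam. \<beta> < \<delta> \<and> a \<le> muf \<delta>"
proof -
  define m where "m = max \<beta> a"
  have "m < lam" using assms by (simp add: m_def)
  then obtain \<delta>1 where d1: "m < \<delta>1" "\<delta>1 < lam" "strongly_inaccessible \<delta>1" using lim2 by blast
  then have ex: "\<exists>x. strongly_inaccessible x \<and> \<delta>1 < x \<and> x < lam" using lim2 by blast
  define \<delta> where "\<delta> = (LEAST x. strongly_inaccessible x \<and> \<delta>1 < x \<and> x < lam)"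
  have d: "strongly_inaccessible \<delta> \<and> \<delta>1 < \<delta> \<and> \<delta> < lam" unfolding \<delta>_def using ex by (rule LeastI_ex)
  have bound: "\<forall>i. strongly_inaccessible i \<and> i < \<delta> \<longrightarrow> i \<le> \<delta>1"
  proof (intro allI impI)
    fix i assume i: "strongly_inaccessible i \<and> i < \<delta>"
    show "i \<le> \<delta>1"
    proof (rule ccontr)
      assume "\<not> i \<le> \<delta>1"
      then have "strongly_inaccessible i \<and> \<delta>1 < i \<and> i < lam" using i d by (meson not_le less_trans)
      then have "\<delta> \<le> i" unfolding \<delta>_def by (rule Least_le)
      then show False using i by (simp add: not_le[symmetric])
    qed
  qed
  have dD: "\<delta> \<in> DD lam" using d bound by (auto simp: DD_def)
  have "\<delta>1 \<le> muf \<delta>" using muf_prop[OF dD] d1(3) d by blast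
  moreover have "a \<le> m" "\<beta> \<le> m" by (auto simp: m_def)
  ultimately show ?thesis using dD d d1(1) by (meson le_less_trans less_imp_le order.trans)
qed



definition I0 :: "'a::wellorder \<Rightarrow> 'a seq set set" where
  "I0 lam = {q. \<exists>\<rho> l S \<Lambda>. W QQ lam q \<rho> l S \<Lambda> \<and> (\<forall>\<delta>\<in>DD lam. l < \<delta> \<and> \<delta> < lam \<longrightarrow> \<delta> \<in> S \<and> Kf \<delta> \<in> \<Lambda> \<delta>)}"

definition Iset :: "'a::wellorder \<Rightarrow> 'a seq set set" where
  "Iset lam = {q' \<in> QQ lam. \<exists>q\<in>I0 lam. q' \<subseteq> q}"

definition Tb :: "'a::wellorder \<Rightarrow> 'a \<Rightarrow> 'a seq set" where
  "Tb lam \<beta> = {\<nu> \<in> sqlt lam. \<forall>\<delta>\<in>DD lam. \<beta> < \<delta> \<and> below \<delta> \<subseteq> dom \<nu> \<longrightarrow> restr \<nu> \<delta> \<in> Hs \<delta> (muf \<delta>)}"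

lemma Iset_dense:
  assumes inacc: "strongly_inaccessible lam"
  shows "dense_open (QQ lam) (Iset lam)"
  unfolding dense_open_def
proof (intro conjI ballI impI)
  show "Iset lam \<subseteq> QQ lam" by (auto simp: Iset_def)
next
  fix p q assume "p \<in> Iset lam" "q \<in> QQ lam" "q \<subseteq> p"
  then show "q \<in> Iset lam" unfolding Iset_def by blast
next
  fix p assume "p \<in> QQ lam"
  then obtain \<rho> l S \<Lambda> where W: "W QQ lam p \<rho> l S \<Lambda>" using QQ_iff by blast
  have hD: "\<forall>\<delta>\<in>DD lam. strongly_inaccessible \<delta>" using DD_inacc by blast
  have hK: "\<forall>\<delta>\<in>DD lam. dense_open (QQ \<delta>) (Kf \<delta>)" using Kf_dense by blast
  have hN: "\<forall>k. strongly_inaccessible k \<longrightarrow> \<not> stationary k (DD lam \<inter> below k)" using DD_nonstat by blast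
  define \<Lambda>' where "\<Lambda>' = (\<lambda>\<delta>. if \<delta> \<in> DD lam \<and> l < \<delta> then insert (Kf \<delta>) (if \<delta> \<in> S then \<Lambda> \<delta> else {}) else \<Lambda> \<delta>)"
  define S' where "S' = S \<union> {\<delta>\<in>DD lam. l < \<delta> \<and> \<delta> < lam}"
  have Wc: "W QQ lam (cutp (DD lam) Kf l p) \<rho> l S' \<Lambda>'"
    unfolding S'_def \<Lambda>'_def using W_cut[OF hD hK hN inacc W] .
  have "\<forall>\<delta>\<in>DD lam. l < \<delta> \<and> \<delta> < lam \<longrightarrow> \<delta> \<in> S' \<and> Kf \<delta> \<in> \<Lambda>' \<delta>"
    by (auto simp: S'_def \<Lambda>'_def)
  then have "cutp (DD lam) Kf l p \<in> I0 lam" using Wc unfolding I0_def by blast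
  moreover have "cutp (DD lam) Kf l p \<in> QQ lam" using W_in_QQ[OF Wc] .
  ultimately have "cutp (DD lam) Kf l p \<in> Iset lam" unfolding Iset_def by blast
  moreover have "cutp (DD lam) Kf l p \<subseteq> p" by (auto simp: cutp_def)
  ultimately show "\<exists>q\<in>Iset lam. q \<subseteq> p" by blast
qed

lemma Tb_nowhere:
  assumes lim2: "\<forall>a<lam. \<exists>d. a < d \<and> d < lam \<and> strongly_inaccessible d" and \<beta>: "\<beta> < lam"
  shows "nowhere_dense_subtree lam (Tb lam \<beta>)"
  unfolding nowhere_dense_subtree_def
proof (intro conjI ballI allI)
  show "Tb lam \<beta> \<subseteq> sqlt lam" by (auto simp: Tb_def)
next
  fix \<eta> a assume h: "\<eta> \<in> Tb lam \<beta>"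
  have "restr \<eta> a \<in> sqlt lam" using h restr_sqlt by (auto simp: Tb_def)
  moreover have "\<forall>\<delta>\<in>DD lam. \<beta> < \<delta> \<and> below \<delta> \<subseteq> dom (restr \<eta> a) \<longrightarrow> restr (restr \<eta> a) \<delta> \<in> Hs \<delta> (muf \<delta>)"
  proof (intro ballI impI)
    fix \<delta> assume d: "\<delta> \<in> DD lam" "\<beta> < \<delta> \<and> below \<delta> \<subseteq> dom (restr \<eta> a)"
    then have "below \<delta> \<subseteq> dom \<eta>" "below \<delta> \<subseteq> below a" by (auto simp: dom_restr)
    then have "\<delta> \<le> a" using below_sub by blast
    then have "restr (restr \<eta> a) \<delta> = restr \<eta> \<delta>" by (simp add: restr_restr min_absorb2)
    then show "restr (restr \<eta> a) \<delta> \<in> Hs \<delta> (muf \<delta>)" using h d \<open>below \<delta> \<subseteq> dom \<eta>\<close> by (simp add: Tb_def)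
  qed
  ultimately show "restr \<eta> a \<in> Tb lam \<beta>" by (simp add: Tb_def)
next
  fix \<eta> assume "\<eta> \<in> sqlt lam"
  then obtain a where a: "a < lam" "\<eta> \<in> sq a" by (auto simp: sqlt_iff)
  obtain \<delta> where \<delta>: "\<delta> \<in> DD lam" "\<beta> < \<delta>" "a \<le> muf \<delta>" using DD_cofinal[OF lim2 \<beta> a(1)] by blast
  have m\<delta>: "muf \<delta> < \<delta>" using muf_prop[OF \<delta>(1)] by blast
  have \<delta>l: "\<delta> < lam" using DD_lt[OF \<delta>(1)] .
  define \<nu> where "\<nu> = (\<lambda>x. if x < a then \<eta> x else if x < \<delta> then Some False else None)"
  have dom\<eta>: "dom \<eta> = below a" using a(2) by (simp add: sq_def)
  have "dom \<nu> = below \<delta>"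
  proof
    show "dom \<nu> \<subseteq> below \<delta>"
    proof
      fix x assume "x \<in> dom \<nu>"
      then show "x \<in> below \<delta>" unfolding \<nu>_def using \<delta>(3) m\<delta>
        by (auto split: if_splits)
    qed
    show "below \<delta> \<subseteq> dom \<nu>"
    proof
      fix x assume x: "x \<in> below \<delta>"
      show "x \<in> dom \<nu>"
      proof (cases "x < a")
        case True then have "x \<in> dom \<eta>" using dom\<eta> by simp
        then show ?thesis using True unfolding \<nu>_def by (simp add: domIff)
      next
        case False then show ?thesis using x unfolding \<nu>_def by (simp add: domIff)
      qed
    qed
  qed
  then have \<nu>sq: "\<nu> \<in> sq \<delta>" by (simp add: sq_def)
  have "\<eta> \<subseteq>\<^sub>m \<nu>" unfolding map_le_def \<nu>_def using dom\<eta> by auto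
  moreover have "\<nu> \<in> sqlt lam" using \<nu>sq \<delta>l sq_sqlt by blast
  moreover have "\<nu> \<notin> Tb lam \<beta>"
  proof
    assume "\<nu> \<in> Tb lam \<beta>"
    moreover have "below \<delta> \<subseteq> dom \<nu>" using \<nu>sq by (simp add: sq_def)
    ultimately have "restr \<nu> \<delta> \<in> Hs \<delta> (muf \<delta>)" using \<delta> unfolding Tb_def by blast
    then have "\<nu> \<in> Hs \<delta> (muf \<delta>)" using restr_id[OF \<nu>sq order_refl] by simp
    then obtain \<alpha> where "muf \<delta> \<le> \<alpha>" "\<alpha> < \<delta>" "\<nu> \<alpha> = Some True" by (auto simp: Hs_def)
    moreover have "\<not> \<alpha> < a" using \<open>muf \<delta> \<le> \<alpha>\<close> \<delta>(3) by simp
    ultimately show False unfolding \<nu>_def by simp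
  qed
  ultimately show "\<exists>\<nu>\<in>sqlt lam. \<eta> \<subseteq>\<^sub>m \<nu> \<and> \<nu> \<notin> Tb lam \<beta>" by blast
qed

lemma fulfils_in_Tb:
  assumes "fulfils lam \<eta> (Iset lam)"
  shows "\<exists>\<beta><lam. \<eta> \<in> limd lam (Tb lam \<beta>)"
proof -
  obtain q' where q': "q' \<in> Iset lam" "\<eta> \<in> limd lam q'" using assms by (auto simp: fulfils_def)
  then obtain q where q: "q \<in> I0 lam" "q' \<subseteq> q" by (auto simp: Iset_def)
  then have \<eta>q: "\<eta> \<in> limd lam q" using q'(2) limd_mono by blast
  obtain \<rho> l S \<Lambda> where W: "W QQ lam q \<rho> l S \<Lambda>" and cond: "\<forall>\<delta>\<in>DD lam. l < \<delta> \<and> \<delta> < lam \<longrightarrow> \<delta> \<in> S \<and> Kf \<delta> \<in> \<Lambda> \<delta>"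
    using q(1) by (auto simp: I0_def)
  note D = W_D[OF W]
  have \<eta>s: "\<eta> \<in> sq lam" and \<eta>r: "\<forall>a<lam. restr \<eta> a \<in> q" using \<eta>q by (auto simp: limd_def)
  have "\<eta> \<in> limd lam (Tb lam l)"
    unfolding limd_def
  proof (intro CollectI conjI allI impI)
    show "\<eta> \<in> sq lam" by (rule \<eta>s)
    fix a assume al: "a < lam"
    have "restr \<eta> a \<in> sqlt lam" using restr_sq[OF \<eta>s] al sq_sqlt by (meson less_imp_le)
    moreover have "\<forall>\<delta>\<in>DD lam. l < \<delta> \<and> below \<delta> \<subseteq> dom (restr \<eta> a) \<longrightarrow> restr (restr \<eta> a) \<delta> \<in> Hs \<delta> (muf \<delta>)"
    proof (intro ballI impI)
      fix \<delta> assume d: "\<delta> \<in> DD lam" "l < \<delta> \<and> below \<delta> \<subseteq> dom (restr \<eta> a)"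
      then have "below \<delta> \<subseteq> below a" by (auto simp: dom_restr)
      then have "\<delta> \<le> a" using below_sub by blast
      then have eq: "restr (restr \<eta> a) \<delta> = restr \<eta> \<delta>" by (simp add: restr_restr min_absorb2)
      have \<delta>l: "\<delta> < lam" using DD_lt[OF d(1)] .
      have ld: "l < \<delta>" using d by blast
      have c: "\<delta> \<in> S" "Kf \<delta> \<in> \<Lambda> \<delta>" using cond d(1) ld \<delta>l by blast+
      have rs: "restr \<eta> \<delta> \<in> sq \<delta>" using restr_sq[OF \<eta>s] \<delta>l by (simp add: less_imp_le)
      have "restr \<eta> \<delta> \<in> q" using \<eta>r \<delta>l by blast
      then have "\<forall>I\<in>\<Lambda> \<delta>. \<exists>q\<in>I. restr \<eta> \<delta> \<in> limd \<delta> q"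
        using conjunct2[OF D(16)[rule_format, OF c(1) ld], rule_format, OF rs] by blast
      then obtain q'' where "q'' \<in> Kf \<delta>" "restr \<eta> \<delta> \<in> limd \<delta> q''" using c(2) by blast
      then have "restr \<eta> \<delta> \<in> Hs \<delta> (muf \<delta>)" by (auto simp: Kf_def KK_def)
      then show "restr (restr \<eta> a) \<delta> \<in> Hs \<delta> (muf \<delta>)" using eq by simp
    qed
    ultimately show "restr \<eta> a \<in> Tb lam l" by (simp add: Tb_def)
  qed
  then show ?thesis using D(8) by blast
qed

theorem claim3p17:
  fixes lam :: "'o::wellorder"
  assumes "strongly_inaccessible lam"
    and "\<forall>a<lam. \<exists>d. a < d \<and> d < lam \<and> strongly_inaccessible d"
  shows "\<exists>A0 A1. A0 \<union> A1 = sq lam \<and> A0 \<inter> A1 = {}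
           \<and> A0 \<in> id_Cohen lam \<and> A1 \<in> id_Q lam"
proof -
  define A0 where "A0 = {\<eta> \<in> sq lam. fulfils lam \<eta> (Iset lam)}"
  define A1 where "A1 = {\<eta> \<in> sq lam. \<not> fulfils lam \<eta> (Iset lam)}"
  obtain i0 where i0: "i0 < lam" using inacc_nonempty[OF assms(1)] by blast
  have "A1 \<in> id_Q lam"
    unfolding id_Q_def
  proof (intro CollectI conjI exI)
    show "A1 \<subseteq> sq lam" by (auto simp: A1_def)
    show "lam \<le> lam" by simp
    show "\<forall>i<lam. dense_open (QQ lam) ((\<lambda>i. Iset lam) i)" using Iset_dense[OF assms(1)] by simp
    show "\<forall>\<eta>\<in>A1. \<exists>i<lam. \<not> fulfils lam \<eta> ((\<lambda>i. Iset lam) i)" using i0 by (auto simp: A1_def)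
  qed
  moreover have "A0 \<in> id_Cohen lam"
    unfolding id_Cohen_def
  proof (intro CollectI conjI exI)
    show "A0 \<subseteq> sq lam" by (auto simp: A0_def)
    show "lam \<le> lam" by simp
    show "\<forall>i<lam. nowhere_dense_subtree lam (Tb lam i)" using Tb_nowhere[OF assms(2)] by blast
    show "A0 \<subseteq> (\<Union>i\<in>below lam. limd lam (Tb lam i))"
      using fulfils_in_Tb by (fastforce simp: A0_def)
  qed
  moreover have "A0 \<union> A1 = sq lam" "A0 \<inter> A1 = {}" by (auto simp: A0_def A1_def)
  ultimately show ?thesis by blast
qed


end
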